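(* Let $T=(T_1,T_2)$ be a cyclic analytic toral isometry on a complex Hilbert space $\mathcal H$ with a cyclic vector $f_0\in\ker T^*=\ker T_1^*\cap\ker T_2^*$. The following are equivalent: (i) $\ker T^*$ is a wandering subspace for $T$; (ii) $T$ is unitarily equivalent to the pair $\mathscr M_z=(\mathscr M_{z_1},\mathscr M_{z_2})$ of multiplications by the coordinate functions on the Hardy space $H^2(\mathbb D^2)$; (iii) $T$ is doubly commuting, i.e. $T_j^*T_i=T_iT_j^*$ for $1\le i\ne j\le 2$.
   Context: A toral isometry is a commuting pair $T=(T_1,T_2)$ with $T_1,T_2$ isometries. $T$ is cyclic with cyclic vector $f_0$ if the closed linear span of $\{T_1^{a}T_2^{b}f_0:a,b\ge0\}$ is $\mathcal H$. $T$ is analytic if $\bigcap_{k\ge0}\sum_{a+b=k}T_1^aT_2^b\mathcal H=\{0\}$. A closed subspace $\mathcal W$ is wandering for $T$ if $T_1^{\alpha_1}T_2^{\alpha_2}\mathcal W\perp T_1^{\beta_1}T_2^{\beta_2}\mathcal W$ whenever $\alpha,\beta\in\mathbb Z_+^2$ and there is $i\in\{1,2\}$ with $\alpha_i=0$ and $\beta_i\ne0$. $H^2(\mathbb D^2)$ is the space of holomorphic $f=\sum_{m,n\ge0}a_{m,n}z_1^mz_2^n$ on the unit bidisc with $\|f\|^2=\sum|a_{m,n}|^2<\infty$. *)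

theory Defs
  imports "HOL-Analysis.Analysis"
begin

text \<open>A complex Hilbert space is represented by a carrier type 'a (an additive
abelian group) together with an explicit complex scalar multiplication sc and an
inner product ip, linear in the first and conjugate-linear in the second argument.\<close>

definition hnorm :: "('a \<Rightarrow> 'a \<Rightarrow> complex) \<Rightarrow> 'a \<Rightarrow> real" where
  "hnorm ip x = sqrt (Re (ip x x))"

definition complex_hilbert ::
  "(complex \<Rightarrow> 'a::ab_group_add \<Rightarrow> 'a) \<Rightarrow> ('a \<Rightarrow> 'a \<Rightarrow> complex) \<Rightarrow> bool" where
  "complex_hilbert sc ip \<longleftrightarrow>
     (\<forall>x. sc 1 x = x) \<and>
     (\<forall>a b x. sc a (sc b x) = sc (a * b) x) \<and>
     (\<forall>a x y. sc a (x + y) = sc a x + sc a y) \<and>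
     (\<forall>a b x. sc (a + b) x = sc a x + sc b x) \<and>
     (\<forall>x y z. ip (x + y) z = ip x z + ip y z) \<and>
     (\<forall>a x y. ip (sc a x) y = a * ip x y) \<and>
     (\<forall>x y. ip y x = cnj (ip x y)) \<and>
     (\<forall>x. Im (ip x x) = 0 \<and> 0 \<le> Re (ip x x)) \<and>
     (\<forall>x. ip x x = 0 \<longrightarrow> x = 0) \<and>
     (\<forall>X :: nat \<Rightarrow> 'a. (\<forall>e>0. \<exists>N. \<forall>m\<ge>N. \<forall>n\<ge>N. hnorm ip (X m - X n) < e)
         \<longrightarrow> (\<exists>L. \<forall>e>0. \<exists>N. \<forall>n\<ge>N. hnorm ip (X n - L) < e))"

definition clinear_map :: "(complex \<Rightarrow> 'a::ab_group_add \<Rightarrow> 'a) \<Rightarrow> ('a \<Rightarrow> 'a) \<Rightarrow> bool" where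
  "clinear_map sc T \<longleftrightarrow> (\<forall>x y. T (x + y) = T x + T y) \<and> (\<forall>c x. T (sc c x) = sc c (T x))"

definition hisometry ::
  "(complex \<Rightarrow> 'a::ab_group_add \<Rightarrow> 'a) \<Rightarrow> ('a \<Rightarrow> 'a \<Rightarrow> complex) \<Rightarrow> ('a \<Rightarrow> 'a) \<Rightarrow> bool" where
  "hisometry sc ip T \<longleftrightarrow> clinear_map sc T \<and> (\<forall>x. hnorm ip (T x) = hnorm ip x)"

definition toral_isometry ::
  "(complex \<Rightarrow> 'a::ab_group_add \<Rightarrow> 'a) \<Rightarrow> ('a \<Rightarrow> 'a \<Rightarrow> complex) \<Rightarrow> ('a \<Rightarrow> 'a) \<Rightarrow> ('a \<Rightarrow> 'a) \<Rightarrow> bool" where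
  "toral_isometry sc ip T1 T2 \<longleftrightarrow> hisometry sc ip T1 \<and> hisometry sc ip T2 \<and> T1 \<circ> T2 = T2 \<circ> T1"

text \<open>Hilbert-space adjoint (exists and is unique for bounded operators).\<close>
definition hadj :: "('a \<Rightarrow> 'a \<Rightarrow> complex) \<Rightarrow> ('a \<Rightarrow> 'a) \<Rightarrow> ('a \<Rightarrow> 'a)" where
  "hadj ip T = (THE S. \<forall>x y. ip (T x) y = ip x (S y))"

definition kerTstar :: "('a::zero \<Rightarrow> 'a \<Rightarrow> complex) \<Rightarrow> ('a \<Rightarrow> 'a) \<Rightarrow> ('a \<Rightarrow> 'a) \<Rightarrow> 'a set" where
  "kerTstar ip T1 T2 = {x. hadj ip T1 x = 0 \<and> hadj ip T2 x = 0}"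

definition hspan :: "(complex \<Rightarrow> 'a::ab_group_add \<Rightarrow> 'a) \<Rightarrow> 'a set \<Rightarrow> 'a set" where
  "hspan sc A = {sum (\<lambda>v. sc (c v) v) F | F c. finite F \<and> F \<subseteq> A}"

definition hclosure :: "('a::ab_group_add \<Rightarrow> 'a \<Rightarrow> complex) \<Rightarrow> 'a set \<Rightarrow> 'a set" where
  "hclosure ip A = {x. \<forall>e>0. \<exists>a\<in>A. hnorm ip (x - a) < e}"

definition closed_hsubspace ::
  "(complex \<Rightarrow> 'a::ab_group_add \<Rightarrow> 'a) \<Rightarrow> ('a \<Rightarrow> 'a \<Rightarrow> complex) \<Rightarrow> 'a set \<Rightarrow> bool" where
  "closed_hsubspace sc ip W \<longleftrightarrow> 0 \<in> W \<and> (\<forall>x\<in>W. \<forall>y\<in>W. x + y \<in> W) \<and>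
     (\<forall>c. \<forall>x\<in>W. sc c x \<in> W) \<and> hclosure ip W \<subseteq> W"

definition cyclic_vector ::
  "(complex \<Rightarrow> 'a::ab_group_add \<Rightarrow> 'a) \<Rightarrow> ('a \<Rightarrow> 'a \<Rightarrow> complex) \<Rightarrow> ('a \<Rightarrow> 'a) \<Rightarrow> ('a \<Rightarrow> 'a) \<Rightarrow> 'a \<Rightarrow> bool" where
  "cyclic_vector sc ip T1 T2 f0 \<longleftrightarrow>
     hclosure ip (hspan sc {(T1 ^^ a) ((T2 ^^ b) f0) | a b. True}) = UNIV"

text \<open>Analytic: \<Inter>_k \<Sum>_{a+b=k} T1^a T2^b H = {0} (algebraic sums of ranges).\<close>
definition analytic_pair :: "('a::ab_group_add \<Rightarrow> 'a) \<Rightarrow> ('a \<Rightarrow> 'a) \<Rightarrow> bool" where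
  "analytic_pair T1 T2 \<longleftrightarrow>
     (\<Inter>k. {(\<Sum>a\<in>{..k}. (T1 ^^ a) ((T2 ^^ (k - a)) (h a))) | h. True}) = {0}"

definition wandering ::
  "(complex \<Rightarrow> 'a::ab_group_add \<Rightarrow> 'a) \<Rightarrow> ('a \<Rightarrow> 'a \<Rightarrow> complex) \<Rightarrow> ('a \<Rightarrow> 'a) \<Rightarrow> ('a \<Rightarrow> 'a) \<Rightarrow> 'a set \<Rightarrow> bool" where
  "wandering sc ip T1 T2 W \<longleftrightarrow> closed_hsubspace sc ip W \<and>
     (\<forall>a1 a2 b1 b2 :: nat. ((a1 = 0 \<and> b1 \<noteq> 0) \<or> (a2 = 0 \<and> b2 \<noteq> 0)) \<longrightarrow>
        (\<forall>w\<in>W. \<forall>v\<in>W. ip ((T1 ^^ a1) ((T2 ^^ a2) w)) ((T1 ^^ b1) ((T2 ^^ b2) v)) = 0))"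

definition doubly_commuting :: "('a \<Rightarrow> 'a \<Rightarrow> complex) \<Rightarrow> ('a \<Rightarrow> 'a) \<Rightarrow> ('a \<Rightarrow> 'a) \<Rightarrow> bool" where
  "doubly_commuting ip T1 T2 \<longleftrightarrow>
     hadj ip T2 \<circ> T1 = T1 \<circ> hadj ip T2 \<and> hadj ip T1 \<circ> T2 = T2 \<circ> hadj ip T1"

definition bidisc :: "(complex \<times> complex) set" where
  "bidisc = {z. cmod (fst z) < 1 \<and> cmod (snd z) < 1}"

definition h2_series :: "(nat \<times> nat \<Rightarrow> complex) \<Rightarrow> (complex \<times> complex \<Rightarrow> complex) \<Rightarrow> bool" where
  "h2_series a f \<longleftrightarrow>
     (\<lambda>p. (cmod (a p))\<^sup>2) summable_on UNIV \<and>
     (\<forall>z\<in>bidisc. ((\<lambda>(m, n). a (m, n) * fst z ^ m * snd z ^ n) has_sum f z) UNIV) \<and>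
     (\<forall>z. z \<notin> bidisc \<longrightarrow> f z = 0)"

definition H2 :: "(complex \<times> complex \<Rightarrow> complex) set" where
  "H2 = {f. \<exists>a. h2_series a f}"

definition h2_coeff :: "(complex \<times> complex \<Rightarrow> complex) \<Rightarrow> nat \<times> nat \<Rightarrow> complex" where
  "h2_coeff f = (THE a. h2_series a f)"

definition h2_inner :: "(complex \<times> complex \<Rightarrow> complex) \<Rightarrow> (complex \<times> complex \<Rightarrow> complex) \<Rightarrow> complex" where
  "h2_inner f g = (\<Sum>\<^sub>\<infinity>p. h2_coeff f p * cnj (h2_coeff g p))"

definition Mz1 :: "(complex \<times> complex \<Rightarrow> complex) \<Rightarrow> (complex \<times> complex \<Rightarrow> complex)" where
  "Mz1 f = (\<lambda>z. if z \<in> bidisc then fst z * f z else 0)"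

definition Mz2 :: "(complex \<times> complex \<Rightarrow> complex) \<Rightarrow> (complex \<times> complex \<Rightarrow> complex)" where
  "Mz2 f = (\<lambda>z. if z \<in> bidisc then snd z * f z else 0)"

definition unitarily_equiv_Mz ::
  "(complex \<Rightarrow> 'a::ab_group_add \<Rightarrow> 'a) \<Rightarrow> ('a \<Rightarrow> 'a \<Rightarrow> complex) \<Rightarrow> ('a \<Rightarrow> 'a) \<Rightarrow> ('a \<Rightarrow> 'a) \<Rightarrow> bool" where
  "unitarily_equiv_Mz sc ip T1 T2 \<longleftrightarrow>
     (\<exists>U :: 'a \<Rightarrow> (complex \<times> complex \<Rightarrow> complex).
        bij_betw U UNIV H2 \<and>
        (\<forall>x y. U (x + y) = (\<lambda>z. U x z + U y z)) \<and>
        (\<forall>c x. U (sc c x) = (\<lambda>z. c * U x z)) \<and>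
        (\<forall>x y. h2_inner (U x) (U y) = ip x y) \<and>
        (\<forall>x. U (T1 x) = Mz1 (U x)) \<and>
        (\<forall>x. U (T2 x) = Mz2 (U x)))"

end

theory Submission
  imports Defs
begin

locale chs =
  fixes sc :: "complex \<Rightarrow> 'a::ab_group_add \<Rightarrow> 'a" and ip :: "'a \<Rightarrow> 'a \<Rightarrow> complex"
  assumes H: "complex_hilbert sc ip"
begin

abbreviation hn where "hn \<equiv> hnorm ip"

lemma sc_one[simp]: "sc 1 x = x" using H[unfolded complex_hilbert_def, THEN conjunct1] by blast
lemma sc_assoc: "sc a (sc b x) = sc (a * b) x" using H[unfolded complex_hilbert_def, THEN conjunct2, THEN conjunct1] by blast
lemma sc_add_right: "sc a (x + y) = sc a x + sc a y" using H[unfolded complex_hilbert_def, THEN conjunct2, THEN conjunct2, THEN conjunct1] by blast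
lemma sc_add_left: "sc (a + b) x = sc a x + sc b x" using H[unfolded complex_hilbert_def, THEN conjunct2, THEN conjunct2, THEN conjunct2, THEN conjunct1] by blast
lemma ip_add_left: "ip (x + y) z = ip x z + ip y z" using H[unfolded complex_hilbert_def, THEN conjunct2, THEN conjunct2, THEN conjunct2, THEN conjunct2, THEN conjunct1] by blast
lemma ip_sc_left: "ip (sc a x) y = a * ip x y" using H[unfolded complex_hilbert_def, THEN conjunct2, THEN conjunct2, THEN conjunct2, THEN conjunct2, THEN conjunct2, THEN conjunct1] by blast
lemma ip_cnj: "ip y x = cnj (ip x y)" using H[unfolded complex_hilbert_def, THEN conjunct2, THEN conjunct2, THEN conjunct2, THEN conjunct2, THEN conjunct2, THEN conjunct2, THEN conjunct1] by blast
lemma ip_self_Im: "Im (ip x x) = 0" using H[unfolded complex_hilbert_def, THEN conjunct2, THEN conjunct2, THEN conjunct2, THEN conjunct2, THEN conjunct2, THEN conjunct2, THEN conjunct2, THEN conjunct1] by blast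
lemma ip_self_Re: "0 \<le> Re (ip x x)" using H[unfolded complex_hilbert_def, THEN conjunct2, THEN conjunct2, THEN conjunct2, THEN conjunct2, THEN conjunct2, THEN conjunct2, THEN conjunct2, THEN conjunct1] by blast
lemma ip_self_zero: "ip x x = 0 \<Longrightarrow> x = 0" using H[unfolded complex_hilbert_def, THEN conjunct2, THEN conjunct2, THEN conjunct2, THEN conjunct2, THEN conjunct2, THEN conjunct2, THEN conjunct2, THEN conjunct2, THEN conjunct1] by blast
lemma complete: fixes X :: "nat \<Rightarrow> 'a" assumes "(\<forall>e>0. \<exists>N. \<forall>m\<ge>N. \<forall>n\<ge>N. hn (X m - X n) < e)"
  shows "(\<exists>L. \<forall>e>0. \<exists>N. \<forall>n\<ge>N. hn (X n - L) < e)"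
  using spec[OF H[unfolded complex_hilbert_def, THEN conjunct2, THEN conjunct2, THEN conjunct2, THEN conjunct2, THEN conjunct2, THEN conjunct2, THEN conjunct2, THEN conjunct2, THEN conjunct2], of X] assms by (rule mp)

lemma sc_zero_left[simp]: "sc 0 x = 0"
  using sc_add_left[of 0 0 x] by simp
lemma sc_zero_right[simp]: "sc a 0 = 0"
  using sc_add_right[of a 0 0] by simp
lemma sc_minus_right: "sc a (- x) = - sc a x"
  using sc_add_right[of a x "-x"] by (metis add.inverse_unique add.right_inverse sc_zero_right)
lemma sc_diff_right: "sc a (x - y) = sc a x - sc a y"
  by (metis diff_conv_add_uminus sc_add_right sc_minus_right)
lemma sc_minus_left: "sc (- a) x = - sc a x"
  using sc_add_left[of a "-a" x] by (metis add.inverse_unique add.right_inverse sc_zero_left)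
lemma sc_diff_left: "sc (a - b) x = sc a x - sc b x"
  by (metis diff_conv_add_uminus sc_add_left sc_minus_left)
lemma sc_minus_one: "sc (-1) x = - x"
  by (simp add: sc_minus_left)

lemma ip_add_right: "ip x (y + z) = ip x y + ip x z"
  by (metis ip_cnj ip_add_left complex_cnj_add)
lemma ip_sc_right: "ip x (sc a y) = cnj a * ip x y"
  by (metis ip_cnj ip_sc_left complex_cnj_mult)
lemma ip_zero_left[simp]: "ip 0 y = 0"
  using ip_add_left[of 0 0 y] by simp
lemma ip_zero_right[simp]: "ip x 0 = 0"
  using ip_add_right[of x 0 0] by simp
lemma ip_minus_left: "ip (- x) y = - ip x y"
  using ip_add_left[of x "-x" y] by (metis add.inverse_unique add.right_inverse ip_zero_left)
lemma ip_minus_right: "ip x (- y) = - ip x y"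
  using ip_add_right[of x y "-y"] by (metis add.inverse_unique add.right_inverse ip_zero_right)
lemma ip_diff_left: "ip (x - y) z = ip x z - ip y z"
  using ip_add_left[of x "-y" z] ip_minus_left[of y z] by simp
lemma ip_diff_right: "ip x (y - z) = ip x y - ip x z"
  using ip_add_right[of x y "-z"] ip_minus_right[of x z] by simp
lemma ip_sum_left: "ip (sum f F) z = (\<Sum>v\<in>F. ip (f v) z)"
  by (induction F rule: infinite_finite_induct) (auto simp: ip_add_left)
lemma ip_sum_right: "ip z (sum f F) = (\<Sum>v\<in>F. ip z (f v))"
  by (induction F rule: infinite_finite_induct) (auto simp: ip_add_right)
lemma sc_sum_right: "sc a (sum f F) = (\<Sum>v\<in>F. sc a (f v))"
  by (induction F rule: infinite_finite_induct) (auto simp: sc_add_right)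

lemmas ip_simps = ip_add_left ip_add_right ip_sc_left ip_sc_right ip_minus_left ip_minus_right
  ip_diff_left ip_diff_right

lemma hn_def': "hn x = sqrt (Re (ip x x))" by (simp add: hnorm_def)
lemma hn_nonneg[simp]: "0 \<le> hn x" by (simp add: hnorm_def ip_self_Re)
lemma ip_self: "ip x x = of_real ((hn x)\<^sup>2)"
  using ip_self_Re[of x] ip_self_Im[of x] by (simp add: hnorm_def complex_eq_iff)
lemma hn_sq: "(hn x)\<^sup>2 = Re (ip x x)"
  using ip_self_Re[of x] by (simp add: hnorm_def)
lemma hn_zero_iff[simp]: "hn x = 0 \<longleftrightarrow> x = 0"
proof
  assume "hn x = 0" then have "ip x x = 0" using ip_self[of x] by simp
  then show "x = 0" by (rule ip_self_zero)
qed (simp add: hnorm_def)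
lemma hn_zero[simp]: "hn 0 = 0" by simp
lemma hn_sc: "hn (sc a x) = cmod a * hn x"
proof -
  have "ip (sc a x) (sc a x) = (a * cnj a) * ip x x"
    by (simp add: ip_sc_left ip_sc_right algebra_simps)
  also have "a * cnj a = of_real ((cmod a)\<^sup>2)" by (rule complex_norm_square[symmetric])
  finally have "ip (sc a x) (sc a x) = of_real ((cmod a)\<^sup>2) * ip x x" .
  then have "(hn (sc a x))\<^sup>2 = ((cmod a) * hn x)\<^sup>2"
    by (simp add: hn_sq power_mult_distrib)
  then show ?thesis by (simp add: power2_eq_iff_nonneg)
qed
lemma hn_minus: "hn (- x) = hn x"
  using hn_sc[of "-1" x] by (simp add: sc_minus_one)
lemma hn_diff_commute: "hn (x - y) = hn (y - x)"
  by (metis hn_minus minus_diff_eq)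

lemma hn_add_sq: "(hn (x + y))\<^sup>2 = (hn x)\<^sup>2 + (hn y)\<^sup>2 + 2 * Re (ip x y)"
proof -
  have "ip (x + y) (x + y) = ip x x + ip y y + (ip x y + cnj (ip x y))"
    by (simp add: ip_add_left ip_add_right ip_cnj[of x y])
  then show ?thesis by (simp add: hn_sq complex_add_cnj)
qed
lemma hn_diff_sq: "(hn (x - y))\<^sup>2 = (hn x)\<^sup>2 + (hn y)\<^sup>2 - 2 * Re (ip x y)"
  using hn_add_sq[of x "-y"] by (simp add: hn_minus ip_minus_right)

lemma cmod_sq_cnj: "complex_of_real (cmod z) * complex_of_real (cmod z) = z * cnj z"
  by (metis complex_norm_square of_real_mult power2_eq_square)

lemma cauchy_schwarz: "cmod (ip x y) \<le> hn x * hn y"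
proof (cases "y = 0")
  case True then show ?thesis by simp
next
  case False
  define t where "t = ip x y / ip y y"
  have yy: "ip y y = of_real ((hn y)\<^sup>2)" by (rule ip_self)
  have hy: "hn y > 0" using False hn_nonneg[of y] hn_zero_iff[of y] by linarith
  have "ip (x - sc t y) (x - sc t y) = ip x x - cnj t * ip x y - t * ip y x + t * cnj t * ip y y"
    by (simp add: ip_simps algebra_simps)
  also have "\<dots> = ip x x - of_real ((cmod (ip x y))\<^sup>2 / (hn y)\<^sup>2)"
    using hy unfolding t_def yy
    by (simp add: ip_cnj[of x y] field_simps cmod_sq_cnj power2_eq_square)
  finally have "0 \<le> (hn x)\<^sup>2 - (cmod (ip x y))\<^sup>2 / (hn y)\<^sup>2"
    using ip_self_Re[of "x - sc t y"] by (simp add: hn_sq)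
  then have "(cmod (ip x y))\<^sup>2 / (hn y)\<^sup>2 \<le> (hn x)\<^sup>2" by simp
  then have "(cmod (ip x y))\<^sup>2 \<le> (hn x)\<^sup>2 * (hn y)\<^sup>2"
    using pos_divide_le_eq[of "(hn y)\<^sup>2" "(cmod (ip x y))\<^sup>2" "(hn x)\<^sup>2"] hy False by simp
  then have "(cmod (ip x y))\<^sup>2 \<le> (hn x * hn y)\<^sup>2"
    by (simp add: power_mult_distrib)
  then show ?thesis
    by (meson hn_nonneg mult_nonneg_nonneg power2_le_imp_le)
qed

lemma Re_ip_le: "Re (ip x y) \<le> hn x * hn y"
  using cauchy_schwarz[of x y] complex_Re_le_cmod order_trans by blast

lemma hn_triangle: "hn (x + y) \<le> hn x + hn y"
proof -
  have "(hn (x + y))\<^sup>2 \<le> (hn x + hn y)\<^sup>2"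
    using Re_ip_le[of x y] by (simp add: hn_add_sq power2_sum)
  then show ?thesis by (rule power2_le_imp_le) simp
qed

lemma hn_triangle_diff: "hn (x - z) \<le> hn (x - y) + hn (y - z)"
  using hn_triangle[of "x - y" "y - z"] by simp

lemma hn_diff_le: "hn (x - y) \<le> hn x + hn y"
  using hn_triangle[of x "-y"] by (simp add: hn_minus)

end


context chs
begin

definition lim_to :: "(nat \<Rightarrow> 'a) \<Rightarrow> 'a \<Rightarrow> bool" where
  "lim_to X L \<longleftrightarrow> (\<lambda>n. hn (X n - L)) \<longlonglongrightarrow> 0"

lemma lim_toI: "(\<And>e. e > 0 \<Longrightarrow> \<exists>N. \<forall>n\<ge>N. hn (X n - L) < e) \<Longrightarrow> lim_to X L"
  unfolding lim_to_def LIMSEQ_def dist_real_def by simp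

lemma lim_toD: "lim_to X L \<Longrightarrow> e > 0 \<Longrightarrow> \<exists>N. \<forall>n\<ge>N. hn (X n - L) < e"
  unfolding lim_to_def LIMSEQ_def dist_real_def by simp

lemma eq_by_small: "(\<And>e. e > 0 \<Longrightarrow> hn x < e) \<Longrightarrow> x = 0"
  by (metis hn_nonneg hn_zero_iff less_irrefl order_le_less)

lemma lim_unique: assumes "lim_to X L" "lim_to X L'" shows "L = L'"
proof -
  have "L - L' = 0"
  proof (rule eq_by_small)
    fix e :: real assume e: "e > 0"
    obtain N1 where N1: "\<forall>n\<ge>N1. hn (X n - L) < e/2" using lim_toD[OF assms(1)] e by (meson half_gt_zero)
    obtain N2 where N2: "\<forall>n\<ge>N2. hn (X n - L') < e/2" using lim_toD[OF assms(2)] e by (meson half_gt_zero)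
    have "hn (L - L') \<le> hn (L - X (max N1 N2)) + hn (X (max N1 N2) - L')" by (rule hn_triangle_diff)
    also have "\<dots> < e"
    proof -
      have "hn (X (max N1 N2) - L) < e/2" using N1 by simp
      moreover have "hn (X (max N1 N2) - L') < e/2" using N2 by simp
      moreover have "hn (L - X (max N1 N2)) = hn (X (max N1 N2) - L)" by (rule hn_diff_commute)
      ultimately show ?thesis by linarith
    qed
    finally show "hn (L - L') < e" .
  qed
  then show ?thesis by simp
qed

lemma complete': assumes "\<And>e. e > 0 \<Longrightarrow> \<exists>N. \<forall>m\<ge>N. \<forall>n\<ge>N. hn (X m - X n) < e"
  shows "\<exists>L. lim_to X L"
  using complete[of X] assms lim_toI by blast

lemma ip_cont_left: assumes "lim_to X L" shows "(\<lambda>n. ip (X n) y) \<longlonglongrightarrow> ip L y"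
proof -
  have "(\<lambda>n. hn (X n - L) * hn y) \<longlonglongrightarrow> 0 * hn y"
    using assms unfolding lim_to_def by (intro tendsto_mult) auto
  then have t: "(\<lambda>n. hn (X n - L) * hn y) \<longlonglongrightarrow> 0" by simp
  have bnd: "\<forall>n. norm (ip (X n) y - ip L y) \<le> hn (X n - L) * hn y"
    by (metis cauchy_schwarz ip_diff_left)
  have "(\<lambda>n. ip (X n) y - ip L y) \<longlonglongrightarrow> 0"
    by (rule Lim_null_comparison[OF always_eventually[OF bnd] t])
  then show ?thesis by (simp add: LIM_zero_iff)
qed

lemma parallelogram: "(hn (a - b))\<^sup>2 + (hn (a + b))\<^sup>2 = 2 * (hn a)\<^sup>2 + 2 * (hn b)\<^sup>2"
  by (simp add: hn_add_sq hn_diff_sq)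

lemma sc_two: "sc 2 x = x + x"
  using sc_add_left[of 1 1 x] by simp

lemma proj_exists:
  assumes M: "closed_hsubspace sc ip M"
  shows "\<exists>p\<in>M. \<forall>m\<in>M. ip (x - p) m = 0"
proof -
  have M0: "0 \<in> M" and Madd: "\<And>a b. a \<in> M \<Longrightarrow> b \<in> M \<Longrightarrow> a + b \<in> M"
    and Msc: "\<And>c a. a \<in> M \<Longrightarrow> sc c a \<in> M" and Mcl: "hclosure ip M \<subseteq> M"
    using M unfolding closed_hsubspace_def by auto
  define D where "D = (\<lambda>m. hn (x - m)) ` M"
  define d where "d = Inf D"
  have Dne: "D \<noteq> {}" using M0 D_def by auto
  have Dbdd: "bdd_below D" unfolding D_def by (rule bdd_belowI[of _ 0]) auto
  have dle: "d \<le> hn (x - m)" if "m \<in> M" for m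
    unfolding d_def D_def using Dbdd that by (auto intro!: cInf_lower simp: D_def)
  have d0: "0 \<le> d" unfolding d_def using Dne by (intro cInf_greatest) (auto simp: D_def)
  have "\<exists>m\<in>M. hn (x - m) < d + 1 / (Suc n)" for n
  proof -
    have "Inf D < d + 1 / Suc n" unfolding d_def by simp
    then obtain t where "t \<in> D" "t < d + 1 / Suc n" using cInf_lessD[OF Dne] by blast
    then show ?thesis unfolding D_def by auto
  qed
  then obtain m where mM: "\<And>n. m n \<in> M" and md: "\<And>n. hn (x - m n) < d + 1 / Suc n"
    by metis
  have mid: "hn (sc 2 (x - sc (1/2) (a + b))) \<ge> 2 * d" if "a \<in> M" "b \<in> M" for a b
  proof -
    have "sc (1/2) (a + b) \<in> M" using that Msc Madd by auto
    then have "d \<le> hn (x - sc (1/2) (a + b))" by (rule dle)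
    then show ?thesis by (simp add: hn_sc)
  qed
  have key: "(hn (m i - m j))\<^sup>2 \<le> 4 * d * (1 / Suc i) + 2 * (1 / Suc i)\<^sup>2 + 4 * d * (1 / Suc j) + 2 * (1 / Suc j)\<^sup>2" for i j
  proof -
    have e2: "sc 2 (x - sc (1/2) (m i + m j)) = (x - m i) + (x - m j)"
      by (simp add: sc_diff_right sc_assoc sc_two sc_add_right algebra_simps)
    have "(hn ((x - m j) - (x - m i)))\<^sup>2 + (hn ((x - m j) + (x - m i)))\<^sup>2
          = 2 * (hn (x - m j))\<^sup>2 + 2 * (hn (x - m i))\<^sup>2" by (rule parallelogram)
    moreover have "(hn ((x - m j) + (x - m i)))\<^sup>2 \<ge> (2 * d)\<^sup>2"
    proof -
      have "2 * d \<le> hn ((x - m j) + (x - m i))"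
        using mid[OF mM mM, of i j] e2 by (simp add: add.commute)
      then show ?thesis using d0 by (intro power_mono) auto
    qed
    moreover have "(hn (x - m i))\<^sup>2 \<le> (d + 1 / Suc i)\<^sup>2"
      using md[of i] by (intro power_mono) auto
    moreover have "(hn (x - m j))\<^sup>2 \<le> (d + 1 / Suc j)\<^sup>2"
      using md[of j] by (intro power_mono) auto
    moreover have "(x - m j) - (x - m i) = m i - m j" by simp
    ultimately show ?thesis by (simp add: power2_sum power_mult_distrib) 
  qed
  have cauchy: "\<exists>N. \<forall>i\<ge>N. \<forall>j\<ge>N. hn (m i - m j) < e" if e: "e > 0" for e
  proof -
    define \<delta> where "\<delta> = min 1 (e\<^sup>2 / (8 * d + 5))"
    have \<delta>0: "\<delta> > 0" using e d0 by (simp add: \<delta>_def)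
    obtain N where N: "1 / Suc N < \<delta>" using \<delta>0 by (meson nat_approx_posE)
    have bnd: "4 * d * (1 / Suc i) + 2 * (1 / Suc i)\<^sup>2 \<le> (4 * d + 2) * \<delta>" if "i \<ge> N" for i
    proof -
      have a: "1 / Suc i \<le> 1 / Suc N" using that by (simp add: frac_le)
      have b: "1 / real (Suc i) \<le> 1" by simp
      have "(1 / Suc i)\<^sup>2 \<le> 1 / Suc i" unfolding power2_eq_square by (rule mult_left_le[OF b]) simp
      then have "4 * d * (1 / Suc i) + 2 * (1 / Suc i)\<^sup>2 \<le> (4 * d + 2) * (1 / Suc i)"
        by (simp add: algebra_simps)
      also have "\<dots> \<le> (4 * d + 2) * \<delta>" using a N d0 by (intro mult_left_mono) auto
      finally show ?thesis .
    qed
    have "(8 * d + 4) * \<delta> < e\<^sup>2"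
    proof -
      have "(8 * d + 4) * \<delta> \<le> (8 * d + 4) * (e\<^sup>2 / (8 * d + 5))"
        using d0 by (intro mult_left_mono) (auto simp: \<delta>_def)
      also have "\<dots> < e\<^sup>2" using d0 e by (simp add: field_simps)
      finally show ?thesis .
    qed
    then have "(hn (m i - m j))\<^sup>2 < e\<^sup>2" if "i \<ge> N" "j \<ge> N" for i j
      using key[of i j] bnd[OF that(1)] bnd[OF that(2)] by (simp add: algebra_simps)
    then show ?thesis using e by (meson power2_less_imp_less less_le)
  qed
  obtain p where p: "lim_to m p" using complete'[OF cauchy] by blast
  have pM: "p \<in> M"
  proof -
    have "p \<in> hclosure ip M" unfolding hclosure_def
    proof (safe)
      fix e :: real assume "e > 0"
      then obtain N where "\<forall>n\<ge>N. hn (m n - p) < e" using lim_toD[OF p] by blast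
      then show "\<exists>a\<in>M. hn (p - a) < e" using mM hn_diff_commute by fastforce
    qed
    then show ?thesis using Mcl by auto
  qed
  have pmin: "hn (x - p) \<le> hn (x - m')" if "m' \<in> M" for m'
  proof -
    have "hn (x - p) < d + e" if e: "e > 0" for e
    proof -
      obtain N1 where N1: "\<forall>n\<ge>N1. hn (m n - p) < e / 2" using lim_toD[OF p] e by (meson half_gt_zero)
      obtain N2 where N2: "1 / Suc N2 < e / 2" using e by (meson half_gt_zero nat_approx_posE)
      define n where "n = max N1 N2"
      have "1 / Suc n \<le> 1 / Suc N2" unfolding n_def by (simp add: frac_le)
      have "hn (x - p) \<le> hn (x - m n) + hn (m n - p)" by (rule hn_triangle_diff)
      also have "\<dots> < d + e"
      proof -
        have "hn (m n - p) < e / 2" using N1 unfolding n_def by simp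
        then show ?thesis using md[of n] N2 \<open>1 / Suc n \<le> 1 / Suc N2\<close> by linarith
      qed
      finally show ?thesis .
    qed
    then have "hn (x - p) \<le> d" by (meson field_le_epsilon less_le)
    then show ?thesis using dle[OF that] by linarith
  qed
  have "ip (x - p) m' = 0" if m'M: "m' \<in> M" for m'
  proof -
    define u where "u = x - p"
    define c where "c = ip u m'"
    define s :: real where "s = 1 / ((hn m')\<^sup>2 + 1)"
    have s0: "s > 0" unfolding s_def by (simp add: add_nonneg_pos)
    have pos: "0 < 1 + (hn m')\<^sup>2" by (simp add: add_pos_nonneg)
    have s1: "s * (hn m')\<^sup>2 < 1" unfolding s_def using pos by (simp add: add.commute divide_less_eq)
    define t where "t = of_real s * c"
    have "p + sc t m' \<in> M" using pM m'M Msc Madd by auto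
    then have "hn u \<le> hn (u - sc t m')" using pmin[of "p + sc t m'"] by (simp add: u_def algebra_simps)
    then have "(hn u)\<^sup>2 \<le> (hn (u - sc t m'))\<^sup>2" by (simp add: power_mono)
    also have "\<dots> = (hn u)\<^sup>2 + (s * cmod c)\<^sup>2 * (hn m')\<^sup>2 - 2 * s * (cmod c)\<^sup>2"
    proof -
      have "cnj t * c = of_real s * (c * cnj c)" by (simp add: t_def)
      also have "\<dots> = of_real (s * (cmod c)\<^sup>2)" by (simp only: of_real_mult complex_norm_square)
      finally have "Re (ip u (sc t m')) = s * (cmod c)\<^sup>2"
        by (simp add: ip_sc_right c_def)
      then show ?thesis by (simp add: hn_diff_sq hn_sc t_def norm_mult power_mult_distrib abs_of_pos[OF s0])
    qed
    finally have "0 \<le> (cmod c)\<^sup>2 * s * (s * (hn m')\<^sup>2 - 2)" by (simp add: algebra_simps power2_eq_square)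
    moreover have neg: "s * (hn m')\<^sup>2 - 2 < 0" using s1 by simp
    ultimately have A: "\<not> (0 < (cmod c)\<^sup>2 * s)"
      using mult_pos_neg[OF _ neg, of "(cmod c)\<^sup>2 * s"] by linarith
    have "\<not> (0 < (cmod c)\<^sup>2)"
    proof
      assume "0 < (cmod c)\<^sup>2"
      then have "0 < (cmod c)\<^sup>2 * s" using s0 by (rule mult_pos_pos)
      then show False using A by simp
    qed
    then have "cmod c = 0" by simp
    then show ?thesis by (simp add: c_def u_def)
  qed
  then show ?thesis using pM by blast
qed

end


context chs
begin

section \<open>Isometries\<close>

lemma iso_add: "hisometry sc ip T \<Longrightarrow> T (x + y) = T x + T y"
  unfolding hisometry_def clinear_map_def by blast
lemma iso_sc: "hisometry sc ip T \<Longrightarrow> T (sc c x) = sc c (T x)"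
  unfolding hisometry_def clinear_map_def by blast
lemma iso_hn: "hisometry sc ip T \<Longrightarrow> hn (T x) = hn x"
  unfolding hisometry_def by blast
lemma iso_zero: "hisometry sc ip T \<Longrightarrow> T 0 = 0"
  using iso_sc[of T 0 0] by simp
lemma iso_minus: "hisometry sc ip T \<Longrightarrow> T (- x) = - T x"
  using iso_sc[of T "-1" x] by (simp add: sc_minus_one)
lemma iso_diff: "hisometry sc ip T \<Longrightarrow> T (x - y) = T x - T y"
  using iso_add[of T x "-y"] iso_minus[of T y] by simp

lemma iso_ip: assumes T: "hisometry sc ip T" shows "ip (T x) (T y) = ip x y"
proof -
  have re: "Re (ip (T a) (T b)) = Re (ip a b)" for a b
  proof -
    have "(hn (T (a + b)))\<^sup>2 = (hn (a + b))\<^sup>2" using iso_hn[OF T] by simp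
    then show ?thesis using iso_add[OF T, of a b] iso_hn[OF T, of a] iso_hn[OF T, of b]
      by (simp add: hn_add_sq)
  qed
  have "Re (ip (T x) (T (sc \<i> y))) = Re (ip x (sc \<i> y))" by (rule re)
  then have "Im (ip (T x) (T y)) = Im (ip x y)"
    by (simp add: iso_sc[OF T] ip_sc_right)
  then show ?thesis using re[of x y] by (simp add: complex_eq_iff)
qed

lemma iso_id: "hisometry sc ip id"
  by (simp add: hisometry_def clinear_map_def)

lemma iso_comp: assumes "hisometry sc ip T" "hisometry sc ip S" shows "hisometry sc ip (T \<circ> S)"
  using assms by (simp add: hisometry_def clinear_map_def)

lemma iso_pow: assumes "hisometry sc ip T" shows "hisometry sc ip (T ^^ n)"
proof (induction n)
  case 0 then show ?case using iso_id by (simp add: id_def)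
next
  case (Suc n) then show ?case using iso_comp[OF assms Suc] by (simp add: comp_def)
qed

section \<open>Adjoints\<close>

lemma ip_eq_right: assumes "\<And>x. ip x a = ip x b" shows "a = b"
proof -
  have "ip (a - b) (a - b) = 0" using assms[of "a - b"] by (simp add: ip_diff_right)
  then have "a - b = 0" by (rule ip_self_zero)
  then show ?thesis by simp
qed

lemma iso_range_closed: assumes T: "hisometry sc ip T" shows "closed_hsubspace sc ip (range T)"
  unfolding closed_hsubspace_def
proof (intro conjI ballI allI subsetI)
  show "0 \<in> range T" using iso_zero[OF T] by (metis rangeI)
  show "a + b \<in> range T" if "a \<in> range T" "b \<in> range T" for a b
  proof -
    from that(1) obtain u where "a = T u" by (rule rangeE) simp
    moreover from that(2) obtain v where "b = T v" by (rule rangeE) simp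
    ultimately have "a + b = T (u + v)" using iso_add[OF T] by simp
    then show ?thesis by simp
  qed
  show "sc c a \<in> range T" if "a \<in> range T" for a c
  proof -
    from that obtain u where "a = T u" by (rule rangeE) simp
    then have "sc c a = T (sc c u)" using iso_sc[OF T] by simp
    then show ?thesis by simp
  qed
  fix y assume y: "y \<in> hclosure ip (range T)"
  have "\<exists>x. hn (y - T x) < 1 / Suc n" for n
    using y unfolding hclosure_def by auto
  then obtain x where x: "\<And>n. hn (y - T (x n)) < 1 / Suc n" by metis
  have "\<exists>N. \<forall>m\<ge>N. \<forall>n\<ge>N. hn (x m - x n) < e" if e: "e > 0" for e
  proof -
    obtain N where N: "1 / Suc N < e / 2" using e by (meson half_gt_zero nat_approx_posE)
    have "hn (x m - x n) < e" if "m \<ge> N" "n \<ge> N" for m n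
    proof -
      have a: "1 / Suc m \<le> 1 / Suc N" "1 / Suc n \<le> 1 / Suc N" using that by (simp_all add: frac_le)
      have "hn (x m - x n) = hn (T (x m) - T (x n))" using iso_hn[OF T] iso_diff[OF T] by metis
      also have "\<dots> \<le> hn (T (x m) - y) + hn (y - T (x n))" by (rule hn_triangle_diff)
      also have "hn (T (x m) - y) = hn (y - T (x m))" by (rule hn_diff_commute)
      finally show ?thesis using x[of m] x[of n] a N by linarith
    qed
    then show ?thesis by blast
  qed
  then obtain z where z: "lim_to x z" using complete' by blast
  have "y - T z = 0"
  proof (rule eq_by_small)
    fix e :: real assume e: "e > 0"
    obtain N1 where N1: "\<forall>n\<ge>N1. hn (x n - z) < e / 2" using lim_toD[OF z] e by (meson half_gt_zero)
    obtain N2 where N2: "1 / Suc N2 < e / 2" using e by (meson half_gt_zero nat_approx_posE)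
    define n where "n = max N1 N2"
    have a: "1 / Suc n \<le> 1 / Suc N2" unfolding n_def by (simp add: frac_le)
    have b: "hn (x n - z) < e / 2" using N1 unfolding n_def by simp
    have "hn (y - T z) \<le> hn (y - T (x n)) + hn (T (x n) - T z)" by (rule hn_triangle_diff)
    also have "hn (T (x n) - T z) = hn (x n - z)" using iso_hn[OF T] iso_diff[OF T] by metis
    finally show "hn (y - T z) < e" using x[of n] a b N2 by linarith
  qed
  then show "y \<in> range T" by auto
qed

lemma adj_exists: assumes T: "hisometry sc ip T" shows "\<exists>S. \<forall>x y. ip (T x) y = ip x (S y)"
proof -
  have "\<exists>z. \<forall>x. ip (T x) y = ip x z" for y
  proof -
    obtain p where p: "p \<in> range T" and o: "\<forall>m\<in>range T. ip (y - p) m = 0"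
      using proj_exists[OF iso_range_closed[OF T], of y] by blast
    obtain z where pz: "p = T z" using p by auto
    have "ip (T x) y = ip x z" for x
    proof -
      have "ip (y - p) (T x) = 0" using o by simp
      then have "ip (T x) (y - p) = 0" using ip_cnj[of "y - p" "T x"] by simp
      then have "ip (T x) y = ip (T x) p" by (simp add: ip_diff_right)
      also have "\<dots> = ip x z" using iso_ip[OF T] pz by simp
      finally show ?thesis .
    qed
    then show ?thesis by blast
  qed
  then show ?thesis by metis
qed

lemma hadj_prop: assumes T: "hisometry sc ip T" shows "ip (T x) y = ip x (hadj ip T y)"
proof -
  have ex1: "\<exists>!S. \<forall>x y. ip (T x) y = ip x (S y)"
  proof -
    obtain S where S: "\<forall>x y. ip (T x) y = ip x (S y)" using adj_exists[OF T] by blast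
    have "S' = S" if "\<forall>x y. ip (T x) y = ip x (S' y)" for S'
    proof
      fix y show "S' y = S y" using that S by (intro ip_eq_right) metis
    qed
    then show ?thesis using S by blast
  qed
  show ?thesis using theI'[OF ex1] unfolding hadj_def by blast
qed

lemma adj_unique: assumes T: "hisometry sc ip T" and "\<And>x. ip (T x) y = ip x z"
  shows "hadj ip T y = z"
  using assms hadj_prop[OF T] by (metis ip_eq_right)

lemma adj_add: "hisometry sc ip T \<Longrightarrow> hadj ip T (x + y) = hadj ip T x + hadj ip T y"
  by (rule adj_unique) (simp_all add: ip_add_right hadj_prop)
lemma adj_sc: "hisometry sc ip T \<Longrightarrow> hadj ip T (sc c x) = sc c (hadj ip T x)"
  by (rule adj_unique) (simp_all add: ip_sc_right hadj_prop)
lemma adj_zero: "hisometry sc ip T \<Longrightarrow> hadj ip T 0 = 0"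
  by (rule adj_unique) simp_all
lemma adj_minus: "hisometry sc ip T \<Longrightarrow> hadj ip T (- x) = - hadj ip T x"
  by (rule adj_unique) (simp_all add: ip_minus_right hadj_prop)
lemma adj_diff: "hisometry sc ip T \<Longrightarrow> hadj ip T (x - y) = hadj ip T x - hadj ip T y"
  by (rule adj_unique) (simp_all add: ip_diff_right hadj_prop)
lemma adj_iso_left: "hisometry sc ip T \<Longrightarrow> hadj ip T (T x) = x"
  by (rule adj_unique) (simp_all add: iso_ip)

lemma adj_bounded: assumes T: "hisometry sc ip T" shows "hn (hadj ip T y) \<le> hn y"
proof -
  let ?a = "hadj ip T y"
  have "(hn ?a)\<^sup>2 = Re (ip ?a ?a)" by (rule hn_sq)
  also have "ip ?a ?a = ip (T ?a) y" using hadj_prop[OF T, of ?a y] by simp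
  also have "Re (ip (T ?a) y) \<le> hn (T ?a) * hn y" by (rule Re_ip_le)
  also have "hn (T ?a) = hn ?a" by (rule iso_hn[OF T])
  finally have "hn ?a * hn ?a \<le> hn ?a * hn y" by (simp add: power2_eq_square)
  then show ?thesis
    by (metis hn_nonneg less_eq_real_def mult_le_cancel_left_pos)
qed

lemma adj_pow: assumes T: "hisometry sc ip T"
  shows "ip ((T ^^ n) x) y = ip x ((hadj ip T ^^ n) y)"
proof (induction n arbitrary: y)
  case 0 then show ?case by simp
next
  case (Suc n)
  have "ip ((T ^^ Suc n) x) y = ip ((T ^^ n) x) (hadj ip T y)"
    using hadj_prop[OF T] by simp
  also have "\<dots> = ip x ((hadj ip T ^^ n) (hadj ip T y))" by (rule Suc)
  also have "(hadj ip T ^^ n) (hadj ip T y) = (hadj ip T ^^ Suc n) y"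
    by (simp add: funpow_Suc_right del: funpow.simps)
  finally show ?case .
qed

section \<open>Spans and density\<close>

lemma hspan_superset: "v \<in> S \<Longrightarrow> v \<in> hspan sc S"
  unfolding hspan_def by (rule CollectI, rule exI[of _ "{v}"], rule exI[of _ "\<lambda>_. 1"]) simp

lemma hspan_zero: "0 \<in> hspan sc S"
  unfolding hspan_def by (rule CollectI, rule exI[of _ "{}"], rule exI[of _ "\<lambda>_. 1"]) simp

lemma hspan_add: assumes "a \<in> hspan sc S" "b \<in> hspan sc S" shows "a + b \<in> hspan sc S"
proof -
  obtain F c where F: "finite F" "F \<subseteq> S" "a = (\<Sum>v\<in>F. sc (c v) v)"
    using assms(1) unfolding hspan_def by blast
  obtain G d where G: "finite G" "G \<subseteq> S" "b = (\<Sum>v\<in>G. sc (d v) v)"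
    using assms(2) unfolding hspan_def by blast
  define c' where "c' v = (if v \<in> F then c v else 0)" for v
  define d' where "d' v = (if v \<in> G then d v else 0)" for v
  have "a = (\<Sum>v\<in>F \<union> G. sc (c' v) v)"
    unfolding F(3) using F(1) G(1) by (intro sum.mono_neutral_cong_left) (auto simp: c'_def)
  moreover have "b = (\<Sum>v\<in>F \<union> G. sc (d' v) v)"
    unfolding G(3) using F(1) G(1) by (intro sum.mono_neutral_cong_left) (auto simp: d'_def)
  ultimately have e: "a + b = (\<Sum>v\<in>F \<union> G. sc (c' v + d' v) v)"
    by (simp add: sum.distrib sc_add_left)
  have "\<exists>H e. a + b = (\<Sum>v\<in>H. sc (e v) v) \<and> finite H \<and> H \<subseteq> S"
    using F G e by (intro exI[of _ "F \<union> G"] exI[of _ "\<lambda>v. c' v + d' v"]) simp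
  then show ?thesis unfolding hspan_def by simp
qed

lemma hspan_sc: assumes "a \<in> hspan sc S" shows "sc k a \<in> hspan sc S"
proof -
  obtain F c where F: "finite F" "F \<subseteq> S" "a = (\<Sum>v\<in>F. sc (c v) v)"
    using assms(1) unfolding hspan_def by blast
  have "sc k a = (\<Sum>v\<in>F. sc (k * c v) v)"
    unfolding F(3) by (simp add: sc_sum_right sc_assoc)
  then have "\<exists>H e. sc k a = (\<Sum>v\<in>H. sc (e v) v) \<and> finite H \<and> H \<subseteq> S"
    using F by (intro exI[of _ F] exI[of _ "\<lambda>v. k * c v"]) simp
  then show ?thesis unfolding hspan_def by simp
qed

lemma hspan_minimal:
  assumes W0: "0 \<in> W" and Wadd: "\<And>a b. a \<in> W \<Longrightarrow> b \<in> W \<Longrightarrow> a + b \<in> W"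
    and Wsc: "\<And>k a. a \<in> W \<Longrightarrow> sc k a \<in> W" and SW: "S \<subseteq> W"
  shows "hspan sc S \<subseteq> W"
proof
  fix x assume "x \<in> hspan sc S"
  then obtain F c where F: "finite F" "F \<subseteq> S" "x = (\<Sum>v\<in>F. sc (c v) v)"
    unfolding hspan_def by blast
  have "(\<Sum>v\<in>F. sc (c v) v) \<in> W" using F(1,2)
  proof (induction F rule: finite_induct)
    case empty then show ?case using W0 by simp
  next
    case (insert v F)
    then show ?case using Wadd Wsc SW by auto
  qed
  then show "x \<in> W" using F(3) by simp
qed

lemma hspan_mono: "S \<subseteq> hspan sc S' \<Longrightarrow> hspan sc S \<subseteq> hspan sc S'"
  by (rule hspan_minimal) (auto intro: hspan_zero hspan_add hspan_sc)

lemma hclosure_mono: "A \<subseteq> B \<Longrightarrow> hclosure ip A \<subseteq> hclosure ip B"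
  unfolding hclosure_def by blast

lemma linear_zero_on_span:
  assumes add: "\<And>a b. \<phi> (a + b) = \<phi> a + \<phi> b" and hom: "\<And>k a. \<phi> (sc k a) = k * \<phi> a"
    and S: "\<And>v. v \<in> S \<Longrightarrow> \<phi> v = 0"
  shows "y \<in> hspan sc S \<Longrightarrow> \<phi> y = 0"
proof -
  have z: "\<phi> 0 = 0" using hom[of 0 0] by simp
  have "hspan sc S \<subseteq> {y. \<phi> y = 0}"
    by (rule hspan_minimal) (use z add hom S in auto)
  then show "y \<in> hspan sc S \<Longrightarrow> \<phi> y = 0" by blast
qed

lemma dense_zero:
  fixes \<phi> :: "'a \<Rightarrow> complex"
  assumes dense: "hclosure ip (hspan sc S) = UNIV"
    and add: "\<And>a b. \<phi> (a + b) = \<phi> a + \<phi> b" and hom: "\<And>k a. \<phi> (sc k a) = k * \<phi> a"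
    and bnd: "\<And>a. norm (\<phi> a) \<le> C * hn a"
    and S: "\<And>v. v \<in> S \<Longrightarrow> \<phi> v = 0"
  shows "\<phi> x = 0"
proof -
  have "norm (\<phi> x) < e" if e: "e > 0" for e
  proof -
    define C' where "C' = max C 0 + 1"
    have C': "C' > 0" "C \<le> C'" unfolding C'_def by auto
    have "x \<in> hclosure ip (hspan sc S)" using dense by simp
    moreover have "e / C' > 0" using e C' by simp
    ultimately obtain a where a: "a \<in> hspan sc S" "hn (x - a) < e / C'"
      unfolding hclosure_def by blast
    have "\<phi> a = 0" by (rule linear_zero_on_span[OF add hom S a(1)])
    moreover have "\<phi> x = \<phi> (x - a) + \<phi> a" using add[of "x - a" a] by simp
    ultimately have "norm (\<phi> x) = norm (\<phi> (x - a))" by simp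
    also have "\<dots> \<le> C * hn (x - a)" by (rule bnd)
    also have "\<dots> \<le> C' * hn (x - a)" using C' by (intro mult_right_mono) auto
    also have "\<dots> < C' * (e / C')" using a(2) C' by (intro mult_strict_left_mono) auto
    also have "\<dots> = e" using C' by simp
    finally show ?thesis .
  qed
  then show ?thesis by (metis norm_eq_zero norm_ge_zero order_less_irrefl order_le_less)
qed

lemma dense_op_eq:
  assumes dense: "hclosure ip (hspan sc S) = UNIV"
    and Aadd: "\<And>a b. A (a + b) = A a + A b" and Ahom: "\<And>k a. A (sc k a) = sc k (A a)"
    and Abnd: "\<And>a. hn (A a) \<le> CA * hn a"
    and Badd: "\<And>a b. B (a + b) = B a + B b" and Bhom: "\<And>k a. B (sc k a) = sc k (B a)"
    and Bbnd: "\<And>a. hn (B a) \<le> CB * hn a"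
    and S: "\<And>v. v \<in> S \<Longrightarrow> A v = B v"
  shows "A x = B x"
proof -
  have "ip (A v - B v) z = 0" for v z
  proof (rule dense_zero[OF dense, where \<phi> = "\<lambda>v. ip (A v - B v) z" and C = "(CA + CB) * hn z"])
    show "ip (A (a + b) - B (a + b)) z = ip (A a - B a) z + ip (A b - B b) z" for a b
      by (simp add: Aadd Badd ip_simps algebra_simps)
    show "ip (A (sc k a) - B (sc k a)) z = k * ip (A a - B a) z" for k a
      by (simp add: Ahom Bhom ip_simps algebra_simps)
    show "norm (ip (A a - B a) z) \<le> (CA + CB) * hn z * hn a" for a
    proof -
      have "norm (ip (A a - B a) z) \<le> hn (A a - B a) * hn z" by (rule cauchy_schwarz)
      also have "hn (A a - B a) \<le> hn (A a) + hn (B a)" by (rule hn_diff_le)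
      also have "\<dots> \<le> (CA + CB) * hn a" using Abnd[of a] Bbnd[of a] by (simp add: algebra_simps)
      finally show ?thesis by (simp add: mult_right_mono algebra_simps)
    qed
    show "ip (A v - B v) z = 0" if "v \<in> S" for v using S[OF that] by simp
  qed
  then have "ip (A x - B x) (A x - B x) = 0" by blast
  then have "A x - B x = 0" by (rule ip_self_zero)
  then show ?thesis by simp
qed

end


locale toral = chs +
  fixes T1 T2 :: "'a \<Rightarrow> 'a"
  assumes i1: "hisometry sc ip T1" and i2: "hisometry sc ip T2" and comm: "T1 \<circ> T2 = T2 \<circ> T1"
begin

lemma comm1: "T1 (T2 x) = T2 (T1 x)"
  using comm by (metis comp_apply)

lemma comm_pow2: "T1 ((T2 ^^ b) x) = (T2 ^^ b) (T1 x)"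
  by (induction b arbitrary: x) (simp_all add: comm1)

lemma comm_pow1: "(T1 ^^ a) (T2 x) = T2 ((T1 ^^ a) x)"
  by (induction a arbitrary: x) (simp_all add: comm1)

lemma comm_pow: "(T1 ^^ a) ((T2 ^^ b) x) = (T2 ^^ b) ((T1 ^^ a) x)"
  by (induction a arbitrary: x) (simp_all add: comm_pow2)

definition orb :: "'a \<Rightarrow> nat \<times> nat \<Rightarrow> 'a" where
  "orb g p = (T1 ^^ fst p) ((T2 ^^ snd p) g)"

lemma orb_T1: "T1 (orb g (m, n)) = orb g (Suc m, n)"
  by (simp add: orb_def)

lemma orb_T2: "T2 (orb g (m, n)) = orb g (m, Suc n)"
  by (simp add: orb_def comm_pow1)

lemma orbit_set: "{(T1 ^^ a) ((T2 ^^ b) g) | a b. True} = range (orb g)"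
proof (intro set_eqI iffI)
  fix x assume "x \<in> {(T1 ^^ a) ((T2 ^^ b) g) | a b. True}"
  then obtain a b where "x = (T1 ^^ a) ((T2 ^^ b) g)" by blast
  then have "x = orb g (a, b)" by (simp add: orb_def)
  then show "x \<in> range (orb g)" by simp
next
  fix x assume "x \<in> range (orb g)"
  then obtain p where "x = orb g p" by blast
  then have "x = (T1 ^^ fst p) ((T2 ^^ snd p) g)" by (simp add: orb_def)
  then show "x \<in> {(T1 ^^ a) ((T2 ^^ b) g) | a b. True}" by blast
qed

definition onb :: "'a \<Rightarrow> bool" where
  "onb g \<longleftrightarrow> (\<forall>p q. ip (orb g p) (orb g q) = (if p = q then 1 else 0)) \<and>
     hclosure ip (hspan sc (range (orb g))) = UNIV"

lemma hn_iso_bound1: "norm (ip (T1 x) y) \<le> hn y * hn x"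
  using cauchy_schwarz[of "T1 x" y] iso_hn[OF i1, of x] by (simp add: mult.commute)
lemma hn_iso_bound2: "norm (ip (T2 x) y) \<le> hn y * hn x"
  using cauchy_schwarz[of "T2 x" y] iso_hn[OF i2, of x] by (simp add: mult.commute)

context
  fixes g assumes O: "onb g"
begin

lemma orth: "ip (orb g p) (orb g q) = (if p = q then 1 else 0)"
  using O unfolding onb_def by blast

lemma dense: "hclosure ip (hspan sc (range (orb g))) = UNIV"
  using O unfolding onb_def by blast

lemma orb_inj: "inj (orb g)"
proof (rule injI)
  fix p q assume "orb g p = orb g q"
  then have "ip (orb g p) (orb g q) = 1" using orth[of p p] by simp
  then show "p = q" using orth[of p q] by (auto split: if_splits)
qed

lemma coeff_T1: "ip (T1 x) (orb g (m, n)) = (if m = 0 then 0 else ip x (orb g (m - 1, n)))"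
proof (cases m)
  case (Suc k)
  then have "ip (T1 x) (orb g (m, n)) = ip (T1 x) (T1 (orb g (k, n)))" by (simp add: orb_T1)
  also have "\<dots> = ip x (orb g (k, n))" by (rule iso_ip[OF i1])
  finally show ?thesis using Suc by simp
next
  case 0
  have "ip (T1 x) (orb g (0, n)) = 0"
  proof (rule dense_zero[OF dense, where \<phi> = "\<lambda>x. ip (T1 x) (orb g (0, n))" and C = "hn (orb g (0, n))"])
    show "ip (T1 (a + b)) (orb g (0, n)) = ip (T1 a) (orb g (0, n)) + ip (T1 b) (orb g (0, n))" for a b
      by (simp add: iso_add[OF i1] ip_add_left)
    show "ip (T1 (sc k a)) (orb g (0, n)) = k * ip (T1 a) (orb g (0, n))" for k a
      by (simp add: iso_sc[OF i1] ip_sc_left)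
    show "norm (ip (T1 a) (orb g (0, n))) \<le> hn (orb g (0, n)) * hn a" for a
      by (rule hn_iso_bound1)
    show "ip (T1 v) (orb g (0, n)) = 0" if "v \<in> range (orb g)" for v
    proof -
      obtain a b where v: "v = orb g (a, b)" using \<open>v \<in> range (orb g)\<close> by (metis rangeE surj_pair)
      show ?thesis unfolding v orb_T1 orth by simp
    qed
  qed
  then show ?thesis using 0 by simp
qed

lemma coeff_T2: "ip (T2 x) (orb g (m, n)) = (if n = 0 then 0 else ip x (orb g (m, n - 1)))"
proof (cases n)
  case (Suc k)
  then have "ip (T2 x) (orb g (m, n)) = ip (T2 x) (T2 (orb g (m, k)))" by (simp add: orb_T2)
  also have "\<dots> = ip x (orb g (m, k))" by (rule iso_ip[OF i2])
  finally show ?thesis using Suc by simp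
next
  case 0
  have "ip (T2 x) (orb g (m, 0)) = 0"
  proof (rule dense_zero[OF dense, where \<phi> = "\<lambda>x. ip (T2 x) (orb g (m, 0))" and C = "hn (orb g (m, 0))"])
    show "ip (T2 (a + b)) (orb g (m, 0)) = ip (T2 a) (orb g (m, 0)) + ip (T2 b) (orb g (m, 0))" for a b
      by (simp add: iso_add[OF i2] ip_add_left)
    show "ip (T2 (sc k a)) (orb g (m, 0)) = k * ip (T2 a) (orb g (m, 0))" for k a
      by (simp add: iso_sc[OF i2] ip_sc_left)
    show "norm (ip (T2 a) (orb g (m, 0))) \<le> hn (orb g (m, 0)) * hn a" for a
      by (rule hn_iso_bound2)
    show "ip (T2 v) (orb g (m, 0)) = 0" if "v \<in> range (orb g)" for v
    proof -
      obtain a b where v: "v = orb g (a, b)" using \<open>v \<in> range (orb g)\<close> by (metis rangeE surj_pair)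
      show ?thesis unfolding v orb_T2 orth by simp
    qed
  qed
  then show ?thesis using 0 by simp
qed

lemma adj2_orb: "hadj ip T2 (orb g (m, n)) = (if n = 0 then 0 else orb g (m, n - 1))"
  by (rule adj_unique[OF i2]) (simp add: coeff_T2)

lemma adj1_orb: "hadj ip T1 (orb g (m, n)) = (if m = 0 then 0 else orb g (m - 1, n))"
  by (rule adj_unique[OF i1]) (simp add: coeff_T1)

lemma dc2: "hadj ip T2 (T1 x) = T1 (hadj ip T2 x)"
proof (rule dense_op_eq[OF dense, where CA = 1 and CB = 1 and A = "\<lambda>x. hadj ip T2 (T1 x)" and B = "\<lambda>x. T1 (hadj ip T2 x)"])
  show "hadj ip T2 (T1 (a + b)) = hadj ip T2 (T1 a) + hadj ip T2 (T1 b)" for a b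
    by (simp add: iso_add[OF i1] adj_add[OF i2])
  show "hadj ip T2 (T1 (sc k a)) = sc k (hadj ip T2 (T1 a))" for k a
    by (simp add: iso_sc[OF i1] adj_sc[OF i2])
  show "hn (hadj ip T2 (T1 a)) \<le> 1 * hn a" for a
    using adj_bounded[OF i2, of "T1 a"] iso_hn[OF i1, of a] by simp
  show "T1 (hadj ip T2 (a + b)) = T1 (hadj ip T2 a) + T1 (hadj ip T2 b)" for a b
    by (simp add: iso_add[OF i1] adj_add[OF i2])
  show "T1 (hadj ip T2 (sc k a)) = sc k (T1 (hadj ip T2 a))" for k a
    by (simp add: iso_sc[OF i1] adj_sc[OF i2])
  show "hn (T1 (hadj ip T2 a)) \<le> 1 * hn a" for a
    using adj_bounded[OF i2, of a] iso_hn[OF i1, of "hadj ip T2 a"] by simp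
  show "hadj ip T2 (T1 v) = T1 (hadj ip T2 v)" if "v \<in> range (orb g)" for v
  proof -
    obtain a b where v: "v = orb g (a, b)" using \<open>v \<in> range (orb g)\<close> by (metis rangeE surj_pair)
    show ?thesis unfolding v orb_T1 adj2_orb by (simp add: iso_zero[OF i1] orb_T1)
  qed
qed

lemma dc1: "hadj ip T1 (T2 x) = T2 (hadj ip T1 x)"
proof (rule dense_op_eq[OF dense, where CA = 1 and CB = 1 and A = "\<lambda>x. hadj ip T1 (T2 x)" and B = "\<lambda>x. T2 (hadj ip T1 x)"])
  show "hadj ip T1 (T2 (a + b)) = hadj ip T1 (T2 a) + hadj ip T1 (T2 b)" for a b
    by (simp add: iso_add[OF i2] adj_add[OF i1])
  show "hadj ip T1 (T2 (sc k a)) = sc k (hadj ip T1 (T2 a))" for k a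
    by (simp add: iso_sc[OF i2] adj_sc[OF i1])
  show "hn (hadj ip T1 (T2 a)) \<le> 1 * hn a" for a
    using adj_bounded[OF i1, of "T2 a"] iso_hn[OF i2, of a] by simp
  show "T2 (hadj ip T1 (a + b)) = T2 (hadj ip T1 a) + T2 (hadj ip T1 b)" for a b
    by (simp add: iso_add[OF i2] adj_add[OF i1])
  show "T2 (hadj ip T1 (sc k a)) = sc k (T2 (hadj ip T1 a))" for k a
    by (simp add: iso_sc[OF i2] adj_sc[OF i1])
  show "hn (T2 (hadj ip T1 a)) \<le> 1 * hn a" for a
    using adj_bounded[OF i1, of a] iso_hn[OF i2, of "hadj ip T1 a"] by simp
  show "hadj ip T1 (T2 v) = T2 (hadj ip T1 v)" if "v \<in> range (orb g)" for v
  proof -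
    obtain a b where v: "v = orb g (a, b)" using \<open>v \<in> range (orb g)\<close> by (metis rangeE surj_pair)
    show ?thesis unfolding v orb_T2 adj1_orb by (simp add: iso_zero[OF i2] orb_T2)
  qed
qed

lemma doubly: "doubly_commuting ip T1 T2"
  unfolding doubly_commuting_def using dc1 dc2 by auto

lemma ip_comb_orb: "finite F \<Longrightarrow> ip (\<Sum>p\<in>F. sc (a p) (orb g p)) (orb g q) = (if q \<in> F then a q else 0)"
  by (simp add: ip_sum_left ip_sc_left orth if_distrib sum.delta cong: if_cong)

lemma ip_orb_comb: "finite F \<Longrightarrow> ip (orb g q) (\<Sum>p\<in>F. sc (a p) (orb g p)) = (if q \<in> F then cnj (a q) else 0)"
  using ip_comb_orb[of F a q] ip_cnj[of "orb g q" "\<Sum>p\<in>F. sc (a p) (orb g p)"] by simp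

lemma hn_comb_sq: assumes F: "finite F"
  shows "(hn (\<Sum>p\<in>F. sc (a p) (orb g p)))\<^sup>2 = (\<Sum>p\<in>F. (cmod (a p))\<^sup>2)"
proof -
  let ?s = "\<Sum>p\<in>F. sc (a p) (orb g p)"
  have "ip ?s ?s = (\<Sum>p\<in>F. a p * ip (orb g p) ?s)" by (simp add: ip_sum_left ip_sc_left)
  also have "\<dots> = (\<Sum>p\<in>F. a p * cnj (a p))" using F by (intro sum.cong) (simp_all add: ip_orb_comb)
  also have "\<dots> = of_real (\<Sum>p\<in>F. (cmod (a p))\<^sup>2)" by (simp only: of_real_sum complex_norm_square)
  finally have "ip ?s ?s = of_real (\<Sum>p\<in>F. (cmod (a p))\<^sup>2)" .
  then show ?thesis using ip_self[of ?s] by (metis of_real_eq_iff)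
qed

lemma hn_diff_comb_sq: assumes F: "finite F"
  shows "(hn (x - (\<Sum>p\<in>F. sc (ip x (orb g p)) (orb g p))))\<^sup>2 = (hn x)\<^sup>2 - (\<Sum>p\<in>F. (cmod (ip x (orb g p)))\<^sup>2)"
proof -
  let ?s = "\<Sum>p\<in>F. sc (ip x (orb g p)) (orb g p)"
  have "ip x ?s = (\<Sum>p\<in>F. cnj (ip x (orb g p)) * ip x (orb g p))" by (simp add: ip_sum_right ip_sc_right)
  also have "\<dots> = (\<Sum>p\<in>F. ip x (orb g p) * cnj (ip x (orb g p)))"
    by (intro sum.cong refl) (rule mult.commute)
  also have "\<dots> = of_real (\<Sum>p\<in>F. (cmod (ip x (orb g p)))\<^sup>2)"
    by (simp only: of_real_sum complex_norm_square)
  finally have r: "Re (ip x ?s) = (\<Sum>p\<in>F. (cmod (ip x (orb g p)))\<^sup>2)" by simp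
  have h: "(hn ?s)\<^sup>2 = (\<Sum>p\<in>F. (cmod (ip x (orb g p)))\<^sup>2)"
    by (rule hn_comb_sq[OF F])
  have e: "(hn (x - ?s))\<^sup>2 = (hn x)\<^sup>2 + (hn ?s)\<^sup>2 - 2 * Re (ip x ?s)" by (rule hn_diff_sq)
  have ar: "\<And>a r :: real. a + r - 2 * r = a - r" by simp
  show ?thesis unfolding e h r by (rule ar)
qed

lemma bessel_fin: assumes F: "finite F" shows "(\<Sum>p\<in>F. (cmod (ip x (orb g p)))\<^sup>2) \<le> (hn x)\<^sup>2"
proof -
  have "0 \<le> (hn (x - (\<Sum>p\<in>F. sc (ip x (orb g p)) (orb g p))))\<^sup>2" by simp
  then have "0 \<le> (hn x)\<^sup>2 - (\<Sum>p\<in>F. (cmod (ip x (orb g p)))\<^sup>2)" unfolding hn_diff_comb_sq[OF F] .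
  then show ?thesis by simp
qed

lemma coeff_summable: "(\<lambda>p. (cmod (ip x (orb g p)))\<^sup>2) summable_on UNIV"
  by (rule nonneg_bdd_above_summable_on) (auto intro!: bdd_aboveI2 bessel_fin)

lemma bessel: "(\<Sum>\<^sub>\<infinity>p. (cmod (ip x (orb g p)))\<^sup>2) \<le> (hn x)\<^sup>2"
  by (rule infsum_le_finite_sums[OF coeff_summable]) (rule bessel_fin)

end

end


lemma cmod_add_sq: "(cmod (u + v))\<^sup>2 = (cmod u)\<^sup>2 + (cmod v)\<^sup>2 + 2 * Re (u * cnj v)"
  unfolding cmod_power2 by (simp add: power2_eq_square algebra_simps)

lemma prod_summable:
  fixes a b :: "'i \<Rightarrow> complex"
  assumes a: "(\<lambda>p. (cmod (a p))\<^sup>2) summable_on A" and b: "(\<lambda>p. (cmod (b p))\<^sup>2) summable_on A"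
  shows "(\<lambda>p. a p * cnj (b p)) summable_on A"
proof -
  have g: "(\<lambda>p. (cmod (a p))\<^sup>2 + (cmod (b p))\<^sup>2) summable_on A"
    using summable_on_add[OF a b] by simp
  have "(\<lambda>p. norm (a p * cnj (b p))) summable_on A"
  proof (rule Infinite_Sum.abs_summable_on_comparison_test'[OF g])
    fix p
    have "cmod (a p) * cmod (b p) \<le> (cmod (a p))\<^sup>2 + (cmod (b p))\<^sup>2"
    proof -
      define M where "M = max (cmod (a p)) (cmod (b p))"
      have "cmod (a p) * cmod (b p) \<le> M * M" by (rule mult_mono) (auto simp: M_def le_max_iff_disj)
      also have "M * M \<le> (cmod (a p))\<^sup>2 + (cmod (b p))\<^sup>2"
        by (cases "cmod (a p) \<le> cmod (b p)") (auto simp: M_def max_def power2_eq_square)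
      finally show ?thesis .
    qed
    then show "norm (a p * cnj (b p)) \<le> (cmod (a p))\<^sup>2 + (cmod (b p))\<^sup>2"
      by (simp add: norm_mult)
  qed
  then show ?thesis by (rule Infinite_Sum.abs_summable_summable)
qed

context toral
begin

context
  fixes g assumes O: "onb g"
begin

abbreviation cf where "cf x p \<equiv> ip x (orb g p)"

lemma best_approx:
  assumes F: "finite F"
  shows "(hn (x - (\<Sum>p\<in>F. sc (cf x p) (orb g p))))\<^sup>2 \<le> (hn (x - (\<Sum>p\<in>F. sc (d p) (orb g p))))\<^sup>2"
proof -
  define s where "s = (\<Sum>p\<in>F. sc (cf x p) (orb g p))"
  define t where "t = (\<Sum>p\<in>F. sc (d p) (orb g p))"
  have st: "s - t = (\<Sum>p\<in>F. sc (cf x p - d p) (orb g p))"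
    unfolding s_def t_def by (simp add: sc_diff_left sum_subtractf)
  have o: "ip (x - s) (orb g q) = 0" if "q \<in> F" for q
    using that F unfolding s_def by (simp add: ip_diff_left ip_comb_orb[OF O])
  have "ip (x - s) (s - t) = (\<Sum>p\<in>F. cnj (cf x p - d p) * ip (x - s) (orb g p))"
    unfolding st by (simp add: ip_sum_right ip_sc_right)
  also have "\<dots> = 0" using o by simp
  finally have z: "ip (x - s) (s - t) = 0" .
  have "x - t = (x - s) + (s - t)" by simp
  then have "(hn (x - t))\<^sup>2 = (hn (x - s))\<^sup>2 + (hn (s - t))\<^sup>2 + 2 * Re (ip (x - s) (s - t))"
    using hn_add_sq by metis
  then have "(hn (x - t))\<^sup>2 = (hn (x - s))\<^sup>2 + (hn (s - t))\<^sup>2" using z by simp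
  then show ?thesis unfolding s_def[symmetric] t_def[symmetric] by simp
qed

lemma parseval_norm: "(hn x)\<^sup>2 = (\<Sum>\<^sub>\<infinity>p. (cmod (cf x p))\<^sup>2)"
proof (rule antisym)
  show "(\<Sum>\<^sub>\<infinity>p. (cmod (cf x p))\<^sup>2) \<le> (hn x)\<^sup>2" by (rule bessel[OF O])
  show "(hn x)\<^sup>2 \<le> (\<Sum>\<^sub>\<infinity>p. (cmod (cf x p))\<^sup>2)"
  proof (rule field_le_epsilon)
    fix \<epsilon> :: real assume e: "\<epsilon> > 0"
    have "x \<in> hclosure ip (hspan sc (range (orb g)))" using dense[OF O] by simp
    moreover have "sqrt \<epsilon> > 0" using e by simp
    ultimately obtain a where a: "a \<in> hspan sc (range (orb g))" "hn (x - a) < sqrt \<epsilon>"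
      unfolding hclosure_def by blast
    obtain F' d where F': "finite F'" "F' \<subseteq> range (orb g)" "a = (\<Sum>v\<in>F'. sc (d v) v)"
      using a(1) unfolding hspan_def by blast
    define F where "F = orb g -` F'"
    have Ffin: "finite F" unfolding F_def using F'(1) orb_inj[OF O] by (simp add: finite_vimageI)
    have FF': "orb g ` F = F'" unfolding F_def using F'(2) by auto
    have aF: "a = (\<Sum>p\<in>F. sc (d (orb g p)) (orb g p))"
      unfolding F'(3) FF'[symmetric] using orb_inj[OF O]
      by (subst sum.reindex) (auto intro: inj_on_subset)
    have "(hn x)\<^sup>2 - (\<Sum>p\<in>F. (cmod (cf x p))\<^sup>2) = (hn (x - (\<Sum>p\<in>F. sc (cf x p) (orb g p))))\<^sup>2"
      using hn_diff_comb_sq[OF O Ffin, of x] by simp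
    also have "\<dots> \<le> (hn (x - a))\<^sup>2" unfolding aF by (rule best_approx[OF Ffin])
    also have "\<dots> < (sqrt \<epsilon>)\<^sup>2" by (rule power_strict_mono[OF a(2)]) simp_all
    also have "\<dots> = \<epsilon>" using e by simp
    finally have "(hn x)\<^sup>2 < (\<Sum>p\<in>F. (cmod (cf x p))\<^sup>2) + \<epsilon>" by simp
    moreover have "(\<Sum>p\<in>F. (cmod (cf x p))\<^sup>2) \<le> (\<Sum>\<^sub>\<infinity>p. (cmod (cf x p))\<^sup>2)"
      by (rule finite_sum_le_infsum[OF coeff_summable[OF O] Ffin]) auto
    ultimately show "(hn x)\<^sup>2 \<le> (\<Sum>\<^sub>\<infinity>p. (cmod (cf x p))\<^sup>2) + \<epsilon>" by simp
  qed
qed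

lemma cf_add: "cf (x + y) p = cf x p + cf y p" by (simp add: ip_add_left)
lemma cf_sc: "cf (sc c x) p = c * cf x p" by (simp add: ip_sc_left)

lemma parseval_ip: "ip x y = (\<Sum>\<^sub>\<infinity>p. cf x p * cnj (cf y p))"
proof -
  define B where "B x y = (\<Sum>\<^sub>\<infinity>p. cf x p * cnj (cf y p))" for x y
  have sm: "(\<lambda>p. cf x p * cnj (cf y p)) summable_on UNIV" for x y
    by (rule prod_summable[OF coeff_summable[OF O] coeff_summable[OF O]])
  have re: "Re (ip x y) = Re (B x y)" for x y
  proof -
    have "(hn (x + y))\<^sup>2 = (\<Sum>\<^sub>\<infinity>p. (cmod (cf x p))\<^sup>2 + (cmod (cf y p))\<^sup>2 + 2 * Re (cf x p * cnj (cf y p)))"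
      unfolding parseval_norm[of "x + y"] cf_add cmod_add_sq ..
    also have "\<dots> = (\<Sum>\<^sub>\<infinity>p. (cmod (cf x p))\<^sup>2) + (\<Sum>\<^sub>\<infinity>p. (cmod (cf y p))\<^sup>2) + (\<Sum>\<^sub>\<infinity>p. 2 * Re (cf x p * cnj (cf y p)))"
      by (subst infsum_add, intro summable_on_add coeff_summable[OF O] summable_on_cmult_right summable_on_Re sm,
          intro summable_on_cmult_right summable_on_Re sm)
         (subst infsum_add, intro coeff_summable[OF O], intro coeff_summable[OF O], rule refl)
    also have "(\<Sum>\<^sub>\<infinity>p. 2 * Re (cf x p * cnj (cf y p))) = 2 * (\<Sum>\<^sub>\<infinity>p. Re (cf x p * cnj (cf y p)))"
      by (rule infsum_cmult_right) (rule summable_on_Re[OF sm])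
    also have "(\<Sum>\<^sub>\<infinity>p. Re (cf x p * cnj (cf y p))) = Re (B x y)"
      unfolding B_def by (rule infsum_Re[OF sm])
    finally have "(hn (x + y))\<^sup>2 = (hn x)\<^sup>2 + (hn y)\<^sup>2 + 2 * Re (B x y)"
      unfolding parseval_norm[of x, symmetric] parseval_norm[of y, symmetric] .
    then show ?thesis using hn_add_sq[of x y] by simp
  qed
  have "Re (ip x (sc \<i> y)) = Re (B x (sc \<i> y))" by (rule re)
  moreover have "B x (sc \<i> y) = - \<i> * B x y"
  proof -
    have "B x (sc \<i> y) = (\<Sum>\<^sub>\<infinity>p. (- \<i>) * (cf x p * cnj (cf y p)))"
      unfolding B_def cf_sc by (simp add: algebra_simps)
    also have "\<dots> = - \<i> * B x y" unfolding B_def by (rule infsum_cmult_right) (rule sm)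
    finally show ?thesis .
  qed
  ultimately have "Im (ip x y) = Im (B x y)" by (simp add: ip_sc_right)
  then show ?thesis using re[of x y] unfolding B_def by (simp add: complex_eq_iff)
qed

lemma synth:
  assumes a: "(\<lambda>p. (cmod (a p))\<^sup>2) summable_on UNIV"
  shows "\<exists>x. \<forall>p. cf x p = a p"
proof -
  define Q where "Q N = {..<N} \<times> {..<(N::nat)}" for N
  have Qfin: "finite (Q N)" for N unfolding Q_def by simp
  have Qmono: "N \<le> M \<Longrightarrow> Q N \<subseteq> Q M" for N M unfolding Q_def by auto
  define s where "s N = (\<Sum>p\<in>Q N. sc (a p) (orb g p))" for N
  define S where "S = (\<Sum>\<^sub>\<infinity>p. (cmod (a p))\<^sup>2)"
  have tail: "\<exists>N0. \<forall>N\<ge>N0. S - (\<Sum>p\<in>Q N. (cmod (a p))\<^sup>2) < \<epsilon>" if e: "\<epsilon> > 0" for \<epsilon>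
  proof -
    obtain F0 where F0: "finite F0" "dist (\<Sum>p\<in>F0. (cmod (a p))\<^sup>2) S \<le> \<epsilon> / 2"
      using infsum_finite_approximation[OF a, of "\<epsilon> / 2"] e unfolding S_def by auto
    obtain N0 where N0: "\<forall>p\<in>F0. fst p < N0 \<and> snd p < N0"
    proof -
      have "finite (fst ` F0 \<union> snd ` F0)" using F0(1) by simp
      then obtain K where K: "\<forall>k\<in>fst ` F0 \<union> snd ` F0. k < K" by (meson finite_nat_set_iff_bounded)
      have "\<forall>p\<in>F0. fst p < K \<and> snd p < K" using K by blast
      then show ?thesis by (rule that)
    qed
    have "S - (\<Sum>p\<in>Q N. (cmod (a p))\<^sup>2) < \<epsilon>" if "N \<ge> N0" for N
    proof -
      have sub: "F0 \<subseteq> Q N" using N0 that unfolding Q_def by force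
      have "(\<Sum>p\<in>F0. (cmod (a p))\<^sup>2) \<le> (\<Sum>p\<in>Q N. (cmod (a p))\<^sup>2)"
        by (rule sum_mono2[OF Qfin sub]) simp
      moreover have "S - (\<Sum>p\<in>F0. (cmod (a p))\<^sup>2) \<le> \<epsilon> / 2"
      proof -
        have "\<bar>(\<Sum>p\<in>F0. (cmod (a p))\<^sup>2) - S\<bar> \<le> \<epsilon> / 2" using F0(2) by (simp only: dist_real_def)
        then show ?thesis by linarith
      qed
      ultimately show ?thesis using e by linarith
    qed
    then show ?thesis by blast
  qed
  have Sle: "(\<Sum>p\<in>Q N. (cmod (a p))\<^sup>2) \<le> S" for N
    unfolding S_def by (rule finite_sum_le_infsum[OF a Qfin]) auto
  have diffsq: "(hn (s M - s N))\<^sup>2 \<le> S - (\<Sum>p\<in>Q N. (cmod (a p))\<^sup>2)" if "N \<le> M" for N M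
  proof -
    have "s M - s N = (\<Sum>p\<in>Q M - Q N. sc (a p) (orb g p))"
      unfolding s_def by (simp add: sum_diff[OF Qfin Qmono[OF that]])
    then have "(hn (s M - s N))\<^sup>2 = (\<Sum>p\<in>Q M - Q N. (cmod (a p))\<^sup>2)"
      using hn_comb_sq[OF O, of "Q M - Q N" a] Qfin by simp
    also have "\<dots> = (\<Sum>p\<in>Q M. (cmod (a p))\<^sup>2) - (\<Sum>p\<in>Q N. (cmod (a p))\<^sup>2)"
      by (simp add: sum_diff[OF Qfin Qmono[OF that]])
    finally show ?thesis using Sle[of M] by linarith
  qed
  have cauchy: "\<exists>N. \<forall>m\<ge>N. \<forall>n\<ge>N. hn (s m - s n) < e" if e: "e > 0" for e
  proof -
    obtain N0 where N0: "\<forall>N\<ge>N0. S - (\<Sum>p\<in>Q N. (cmod (a p))\<^sup>2) < e\<^sup>2"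
      using tail[of "e\<^sup>2"] e by auto
    have "hn (s m - s n) < e" if "m \<ge> N0" "n \<ge> N0" for m n
    proof (cases "n \<le> m")
      case True
      then have "(hn (s m - s n))\<^sup>2 < e\<^sup>2" using diffsq[OF True] N0 that by fastforce
      then show ?thesis using e by (meson hn_nonneg power2_less_imp_less less_le)
    next
      case False
      then have "(hn (s n - s m))\<^sup>2 < e\<^sup>2" using diffsq[of m n] N0 that by fastforce
      then show ?thesis using e hn_diff_commute[of "s m"] by (metis hn_nonneg power2_less_imp_less less_le)
    qed
    then show ?thesis by blast
  qed
  obtain x where x: "lim_to s x" using complete'[OF cauchy] by blast
  have "cf x q = a q" for q
  proof -
    have l1: "(\<lambda>N. ip (s N) (orb g q)) \<longlonglongrightarrow> cf x q" by (rule ip_cont_left[OF x])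
    have "eventually (\<lambda>N. ip (s N) (orb g q) = a q) sequentially"
    proof (rule eventually_sequentiallyI[of "Suc (max (fst q) (snd q))"])
      fix N assume "Suc (max (fst q) (snd q)) \<le> N"
      then have "q \<in> Q N" unfolding Q_def by (cases q) auto
      then show "ip (s N) (orb g q) = a q" unfolding s_def by (simp add: ip_comb_orb[OF O Qfin])
    qed
    then have l2: "(\<lambda>N. ip (s N) (orb g q)) \<longlonglongrightarrow> a q" by (rule tendsto_eventually)
    show ?thesis using LIMSEQ_unique[OF l1 l2] .
  qed
  then show ?thesis by blast
qed

end

end


lemma pow1_unique:
  fixes c :: "nat \<Rightarrow> complex"
  assumes sm: "\<And>z. cmod z < 1 \<Longrightarrow> (\<lambda>n. c n * z ^ n) sums 0"
  shows "c k = 0"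
proof (induction k rule: less_induct)
  case (less k)
  have sk: "(\<lambda>n. c (n + k) * z ^ n) sums 0" if z: "z \<noteq> 0" "cmod z < 1" for z
  proof -
    have "(\<lambda>n. c (n + k) * z ^ (n + k)) sums (0 - (\<Sum>i<k. c i * z ^ i))"
      using sums_split_initial_segment[OF sm[OF z(2)], of k] by simp
    moreover have "(\<Sum>i<k. c i * z ^ i) = 0" using less by simp
    ultimately have "(\<lambda>n. c (n + k) * z ^ (n + k)) sums 0" by simp
    then have "(\<lambda>n. c (n + k) * z ^ (n + k) / z ^ k) sums (0 / z ^ k)" by (rule sums_divide)
    moreover have "c (n + k) * z ^ (n + k) / z ^ k = c (n + k) * z ^ n" for n
      using z(1) by (simp add: power_add)
    ultimately show ?thesis by simp
  qed
  have "((\<lambda>_. 0) \<longlongrightarrow> c (0 + k)) (at (0::complex))"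
    by (rule powser_limit_0_strong[of 1]) (use sk in auto)
  then have "c k = 0"
    using tendsto_unique[OF trivial_limit_at tendsto_const] by (metis add_0)
  then show ?case .
qed

lemma geom2_summable:
  fixes r s :: real
  assumes r: "0 \<le> r" "r < 1" and s: "0 \<le> s" "s < 1"
  shows "(\<lambda>p. r ^ fst p * s ^ snd p) summable_on UNIV"
proof (rule nonneg_bdd_above_summable_on)
  show "0 \<le> r ^ fst p * s ^ snd p" for p using r s by simp
  have gr: "(\<Sum>m<N. r ^ m) \<le> 1 / (1 - r)" for N
  proof -
    have "(\<Sum>m<N. r ^ m) \<le> (\<Sum>m. r ^ m)"
      by (rule sum_le_suminf) (use r in \<open>auto intro: summable_geometric\<close>)
    then show ?thesis using r by (simp add: suminf_geometric)
  qed
  have gs: "(\<Sum>m<N. s ^ m) \<le> 1 / (1 - s)" for N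
  proof -
    have "(\<Sum>m<N. s ^ m) \<le> (\<Sum>m. s ^ m)"
      by (rule sum_le_suminf) (use s in \<open>auto intro: summable_geometric\<close>)
    then show ?thesis using s by (simp add: suminf_geometric)
  qed
  show "bdd_above (sum (\<lambda>p. r ^ fst p * s ^ snd p) ` {F. F \<subseteq> UNIV \<and> finite F})"
  proof (rule bdd_aboveI2)
    fix F :: "(nat \<times> nat) set" assume "F \<in> {F. F \<subseteq> UNIV \<and> finite F}"
    then have F: "finite F" by simp
    have "finite (fst ` F \<union> snd ` F)" using F by simp
    then obtain N where N: "\<forall>k\<in>fst ` F \<union> snd ` F. k < N" by (meson finite_nat_set_iff_bounded)
    have sub: "F \<subseteq> {..<N} \<times> {..<N}" using N by force
    have "(\<Sum>p\<in>F. r ^ fst p * s ^ snd p) \<le> (\<Sum>p\<in>{..<N} \<times> {..<N}. r ^ fst p * s ^ snd p)"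
      by (rule sum_mono2) (use sub r s in auto)
    also have "\<dots> = (\<Sum>(m, n)\<in>{..<N} \<times> {..<N}. r ^ m * s ^ n)"
      by (rule sum.cong) auto
    also have "\<dots> = (\<Sum>m<N. \<Sum>n<N. r ^ m * s ^ n)"
      by (rule sum.cartesian_product[symmetric])
    also have "\<dots> = (\<Sum>m<N. r ^ m) * (\<Sum>n<N. s ^ n)"
      by (simp add: sum_product)
    also have "\<dots> \<le> 1 / (1 - r) * (1 / (1 - s))"
      by (rule mult_mono[OF gr gs]) (use r s in \<open>auto intro: sum_nonneg\<close>)
    finally show "(\<Sum>p\<in>F. r ^ fst p * s ^ snd p) \<le> 1 / (1 - r) * (1 / (1 - s))" .
  qed
qed

lemma h2_summable_at:
  fixes a :: "nat \<times> nat \<Rightarrow> complex"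
  assumes a: "(\<lambda>p. (cmod (a p))\<^sup>2) summable_on UNIV" and z: "z \<in> bidisc"
  shows "(\<lambda>(m, n). a (m, n) * fst z ^ m * snd z ^ n) summable_on UNIV"
proof -
  define y where "y p = fst z ^ fst p * snd z ^ snd p" for p
  have z1: "cmod (fst z) < 1" and z2: "cmod (snd z) < 1" using z by (auto simp: bidisc_def)
  have yy: "(\<lambda>p. norm (y p * y p)) summable_on UNIV"
  proof -
    have "(\<lambda>p. ((cmod (fst z))\<^sup>2) ^ fst p * ((cmod (snd z))\<^sup>2) ^ snd p) summable_on UNIV"
      by (rule geom2_summable) (use z1 z2 in \<open>auto simp: power_less_one_iff abs_square_less_1\<close>)
    moreover have "norm (y p * y p) = ((cmod (fst z))\<^sup>2) ^ fst p * ((cmod (snd z))\<^sup>2) ^ snd p" for p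
      unfolding y_def by (simp add: norm_mult norm_power power_mult_distrib power2_eq_square power_mult[symmetric] algebra_simps)
    ultimately show ?thesis by simp
  qed
  have aa: "(\<lambda>p. norm (a p * a p)) summable_on UNIV"
    using a by (simp add: norm_mult power2_eq_square)
  have "(\<lambda>p. norm (a p * y p)) summable_on UNIV"
    by (rule abs_summable_product[OF aa yy])
  then have "(\<lambda>p. a p * y p) summable_on UNIV" by (rule Infinite_Sum.abs_summable_summable)
  moreover have "(\<lambda>(m, n). a (m, n) * fst z ^ m * snd z ^ n) = (\<lambda>p. a p * y p)"
    by (auto simp: y_def fun_eq_iff)
  ultimately show ?thesis by simp
qed


lemma has_sum_diff':
  fixes f g :: "'i \<Rightarrow> complex"
  assumes "(f has_sum a) A" "(g has_sum b) A"
  shows "((\<lambda>x. f x - g x) has_sum (a - b)) A"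
proof -
  have "((\<lambda>x. - g x) has_sum (- b)) A" using assms(2) by (simp add: has_sum_uminus)
  from has_sum_add[OF assms(1) this] show ?thesis by simp
qed

lemma pow2_zero:
  fixes c :: "nat \<times> nat \<Rightarrow> complex"
  assumes sq: "(\<lambda>p. (cmod (c p))\<^sup>2) summable_on UNIV"
    and hs: "\<And>z. z \<in> bidisc \<Longrightarrow> ((\<lambda>(m, n). c (m, n) * fst z ^ m * snd z ^ n) has_sum 0) UNIV"
  shows "c p = 0"
proof -
  have inner0: "(\<lambda>n. c (m, n) * w ^ n) sums 0" if w: "cmod w < 1" for w m
  proof -
    have inn: "(\<lambda>n. c (m, n) * w ^ n) summable_on UNIV" for m
    proof -
      have "(1/2, w) \<in> bidisc" using w by (simp add: bidisc_def)
      from h2_summable_at[OF sq this]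
      have "(\<lambda>(m, n). c (m, n) * (1/2) ^ m * w ^ n) summable_on (UNIV \<times> UNIV)" by simp
      then have "(\<lambda>n. c (m, n) * (1/2) ^ m * w ^ n) summable_on UNIV"
        using summable_on_SigmaD1[where f = "\<lambda>m n. c (m, n) * (1/2) ^ m * w ^ n" and A = UNIV and B = "\<lambda>_. UNIV"]
        by simp
      then have "(\<lambda>n. (1/2) ^ m * (c (m, n) * w ^ n)) summable_on UNIV"
        by (simp add: algebra_simps)
      then show ?thesis by (subst (asm) summable_on_cmult_right') simp_all
    qed
    define d where "d m = (\<Sum>\<^sub>\<infinity>n. c (m, n) * w ^ n)" for m
    have dz: "d m = 0" for m
    proof (rule pow1_unique)
      fix u :: complex assume u: "cmod u < 1"
      have "(u, w) \<in> bidisc" using u w by (simp add: bidisc_def)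
      from hs[OF this] have h2: "((\<lambda>(m, n). c (m, n) * u ^ m * w ^ n) has_sum 0) (UNIV \<times> UNIV)" by simp
      have "((\<lambda>n. c (m, n) * u ^ m * w ^ n) has_sum (u ^ m * d m)) UNIV" for m
      proof -
        have "((\<lambda>n. u ^ m * (c (m, n) * w ^ n)) has_sum (u ^ m * d m)) UNIV"
          unfolding d_def by (rule has_sum_cmult_right) (rule has_sum_infsum[OF inn])
        then show ?thesis by (simp add: algebra_simps)
      qed
      then have "((\<lambda>m. u ^ m * d m) has_sum 0) UNIV"
        by (intro has_sum_SigmaD[OF h2]) simp
      then have "(\<lambda>m. u ^ m * d m) sums 0" by (rule has_sum_imp_sums)
      then show "(\<lambda>m. d m * u ^ m) sums 0" by (simp add: mult.commute)
    qed
    have "((\<lambda>n. c (m, n) * w ^ n) has_sum 0) UNIV"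
      using has_sum_infsum[OF inn[of m]] dz[of m] unfolding d_def by simp
    then show ?thesis by (rule has_sum_imp_sums)
  qed
  obtain m n where p: "p = (m, n)" by (cases p)
  have "c (m, n) = 0" by (rule pow1_unique[where c = "\<lambda>n. c (m, n)"]) (rule inner0)
  then show ?thesis using p by simp
qed

lemma h2_unique:
  assumes a: "h2_series a f" and b: "h2_series b f"
  shows "a = b"
proof -
  define c where "c p = a p - b p" for p
  have sa: "(\<lambda>p. (cmod (a p))\<^sup>2) summable_on UNIV" using a unfolding h2_series_def by blast
  have sb: "(\<lambda>p. (cmod (b p))\<^sup>2) summable_on UNIV" using b unfolding h2_series_def by blast
  have sq: "(\<lambda>p. (cmod (c p))\<^sup>2) summable_on UNIV"
  proof (rule summable_on_comparison_test)
    show "(\<lambda>p. 2 * (cmod (a p))\<^sup>2 + 2 * (cmod (b p))\<^sup>2) summable_on UNIV"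
      by (intro summable_on_add summable_on_cmult_right sa sb)
    show "(cmod (c p))\<^sup>2 \<le> 2 * (cmod (a p))\<^sup>2 + 2 * (cmod (b p))\<^sup>2" for p
    proof -
      have "cmod (c p) \<le> cmod (a p) + cmod (b p)" unfolding c_def by (rule norm_triangle_ineq4)
      then have "(cmod (c p))\<^sup>2 \<le> (cmod (a p) + cmod (b p))\<^sup>2" by (simp add: power_mono)
      also have "\<dots> \<le> 2 * (cmod (a p))\<^sup>2 + 2 * (cmod (b p))\<^sup>2"
        using sum_squares_bound[of "cmod (a p)" "cmod (b p)"] by (simp add: power2_sum)
      finally show ?thesis .
    qed
    show "0 \<le> (cmod (c p))\<^sup>2" for p by simp
  qed
  have "c p = 0" for p
  proof (rule pow2_zero[OF sq])
    fix z assume z: "z \<in> bidisc"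
    have ha: "((\<lambda>(m, n). a (m, n) * fst z ^ m * snd z ^ n) has_sum f z) UNIV"
      using a z unfolding h2_series_def by blast
    have hb: "((\<lambda>(m, n). b (m, n) * fst z ^ m * snd z ^ n) has_sum f z) UNIV"
      using b z unfolding h2_series_def by blast
    have eq: "(\<lambda>(m, n). c (m, n) * fst z ^ m * snd z ^ n) =
      (\<lambda>x. (case x of (m, n) \<Rightarrow> a (m, n) * fst z ^ m * snd z ^ n) - (case x of (m, n) \<Rightarrow> b (m, n) * fst z ^ m * snd z ^ n))"
      by (auto simp: fun_eq_iff c_def algebra_simps)
    from has_sum_diff'[OF ha hb]
    show "((\<lambda>(m, n). c (m, n) * fst z ^ m * snd z ^ n) has_sum 0) UNIV"
      unfolding eq by simp
  qed
  then show ?thesis unfolding c_def by (simp add: fun_eq_iff)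
qed

lemma h2_coeff_eq: "h2_series a f \<Longrightarrow> h2_coeff f = a"
  unfolding h2_coeff_def by (rule the_equality) (auto intro: h2_unique)

lemma H2_series: "f \<in> H2 \<Longrightarrow> h2_series (h2_coeff f) f"
  unfolding H2_def using h2_coeff_eq by auto

definition ser :: "(nat \<times> nat \<Rightarrow> complex) \<Rightarrow> complex \<times> complex \<Rightarrow> complex" where
  "ser a z = (if z \<in> bidisc then (\<Sum>\<^sub>\<infinity>(m, n). a (m, n) * fst z ^ m * snd z ^ n) else 0)"

definition sqs :: "(nat \<times> nat \<Rightarrow> complex) \<Rightarrow> bool" where
  "sqs a \<longleftrightarrow> (\<lambda>p. (cmod (a p))\<^sup>2) summable_on UNIV"

lemma ser_h2: assumes "sqs a" shows "h2_series a (ser a)"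
  unfolding h2_series_def
proof (intro conjI ballI allI impI)
  show "(\<lambda>p. (cmod (a p))\<^sup>2) summable_on UNIV" using assms unfolding sqs_def .
  show "((\<lambda>(m, n). a (m, n) * fst z ^ m * snd z ^ n) has_sum ser a z) UNIV" if "z \<in> bidisc" for z
    unfolding ser_def using that h2_summable_at[OF assms[unfolded sqs_def] that]
    by (simp add: has_sum_infsum)
  show "ser a z = 0" if "z \<notin> bidisc" for z using that by (simp add: ser_def)
qed

lemma ser_H2: "sqs a \<Longrightarrow> ser a \<in> H2"
  unfolding H2_def using ser_h2 by blast

lemma coeff_ser: "sqs a \<Longrightarrow> h2_coeff (ser a) = a"
  by (rule h2_coeff_eq[OF ser_h2])

lemma h2_series_ser: assumes "h2_series a f" shows "f = ser a"
proof
  fix z show "f z = ser a z"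
  proof (cases "z \<in> bidisc")
    case True
    then have "((\<lambda>(m, n). a (m, n) * fst z ^ m * snd z ^ n) has_sum f z) UNIV"
      using assms unfolding h2_series_def by blast
    then show ?thesis using True unfolding ser_def by (simp add: infsumI)
  next
    case False
    have "\<forall>z. z \<notin> bidisc \<longrightarrow> f z = 0" using assms unfolding h2_series_def by blast
    then have "f z = 0" using False by blast
    then show ?thesis using False unfolding ser_def by simp
  qed
qed

lemma H2_ser: "f \<in> H2 \<Longrightarrow> f = ser (h2_coeff f) \<and> sqs (h2_coeff f)"
  using H2_series h2_series_ser unfolding h2_series_def sqs_def by blast

lemma h2_inner_ser: "sqs a \<Longrightarrow> sqs b \<Longrightarrow> h2_inner (ser a) (ser b) = (\<Sum>\<^sub>\<infinity>p. a p * cnj (b p))"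
  unfolding h2_inner_def by (simp add: coeff_ser)

definition shift1 :: "(nat \<times> nat \<Rightarrow> complex) \<Rightarrow> nat \<times> nat \<Rightarrow> complex" where
  "shift1 a p = (if fst p = 0 then 0 else a (fst p - 1, snd p))"
definition shift2 :: "(nat \<times> nat \<Rightarrow> complex) \<Rightarrow> nat \<times> nat \<Rightarrow> complex" where
  "shift2 a p = (if snd p = 0 then 0 else a (fst p, snd p - 1))"

lemma Mz1_ser: "Mz1 (ser a) = ser (shift1 a)"
proof
  fix z
  show "Mz1 (ser a) z = ser (shift1 a) z"
  proof (cases "z \<in> bidisc")
    case False then show ?thesis by (simp add: Mz1_def ser_def)
  next
    case True
    define h where "h = (\<lambda>(m::nat, n::nat). (Suc m, n))"
    have inj: "inj h" unfolding h_def by (auto simp: inj_def)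
    have "(\<Sum>\<^sub>\<infinity>(m, n). shift1 a (m, n) * fst z ^ m * snd z ^ n)
        = (\<Sum>\<^sub>\<infinity>p\<in>range h. (\<lambda>(m, n). shift1 a (m, n) * fst z ^ m * snd z ^ n) p)"
    proof (rule infsum_cong_neutral)
      fix p assume "p \<in> UNIV - range h"
      then have "fst p = 0" unfolding h_def
        by (cases p) (metis (no_types, lifting) DiffE UNIV_I case_prod_conv not0_implies_Suc rangeI split_pairs)
      then show "(case p of (m, n) \<Rightarrow> shift1 a (m, n) * fst z ^ m * snd z ^ n) = 0"
        by (cases p) (simp add: shift1_def)
    qed auto
    also have "\<dots> = (\<Sum>\<^sub>\<infinity>p. ((\<lambda>(m, n). shift1 a (m, n) * fst z ^ m * snd z ^ n) \<circ> h) p)"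
      by (rule infsum_reindex[OF inj])
    also have "\<dots> = (\<Sum>\<^sub>\<infinity>(m, n). fst z * (a (m, n) * fst z ^ m * snd z ^ n))"
      by (rule infsum_cong) (auto simp: h_def shift1_def)
    also have "\<dots> = (\<Sum>\<^sub>\<infinity>p. fst z * (case p of (m, n) \<Rightarrow> a (m, n) * fst z ^ m * snd z ^ n))"
      by (rule infsum_cong) (simp add: case_prod_beta)
    also have "\<dots> = fst z * (\<Sum>\<^sub>\<infinity>(m, n). a (m, n) * fst z ^ m * snd z ^ n)"
      by (rule infsum_cmult_right')
    finally show ?thesis using True by (simp add: Mz1_def ser_def)
  qed
qed

lemma Mz2_ser: "Mz2 (ser a) = ser (shift2 a)"
proof
  fix z
  show "Mz2 (ser a) z = ser (shift2 a) z"
  proof (cases "z \<in> bidisc")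
    case False then show ?thesis by (simp add: Mz2_def ser_def)
  next
    case True
    define h where "h = (\<lambda>(m::nat, n::nat). (m, Suc n))"
    have inj: "inj h" unfolding h_def by (auto simp: inj_def)
    have "(\<Sum>\<^sub>\<infinity>(m, n). shift2 a (m, n) * fst z ^ m * snd z ^ n)
        = (\<Sum>\<^sub>\<infinity>p\<in>range h. (\<lambda>(m, n). shift2 a (m, n) * fst z ^ m * snd z ^ n) p)"
    proof (rule infsum_cong_neutral)
      fix p assume "p \<in> UNIV - range h"
      then have "snd p = 0" unfolding h_def
        by (cases p) (metis (no_types, lifting) DiffE UNIV_I case_prod_conv not0_implies_Suc rangeI split_pairs)
      then show "(case p of (m, n) \<Rightarrow> shift2 a (m, n) * fst z ^ m * snd z ^ n) = 0"
        by (cases p) (simp add: shift2_def)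
    qed auto
    also have "\<dots> = (\<Sum>\<^sub>\<infinity>p. ((\<lambda>(m, n). shift2 a (m, n) * fst z ^ m * snd z ^ n) \<circ> h) p)"
      by (rule infsum_reindex[OF inj])
    also have "\<dots> = (\<Sum>\<^sub>\<infinity>(m, n). snd z * (a (m, n) * fst z ^ m * snd z ^ n))"
      by (rule infsum_cong) (auto simp: h_def shift2_def)
    also have "\<dots> = (\<Sum>\<^sub>\<infinity>p. snd z * (case p of (m, n) \<Rightarrow> a (m, n) * fst z ^ m * snd z ^ n))"
      by (rule infsum_cong) (simp add: case_prod_beta)
    also have "\<dots> = snd z * (\<Sum>\<^sub>\<infinity>(m, n). a (m, n) * fst z ^ m * snd z ^ n)"
      by (rule infsum_cmult_right')
    finally show ?thesis using True by (simp add: Mz2_def ser_def)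
  qed
qed

definition delta :: "nat \<times> nat \<Rightarrow> nat \<times> nat \<Rightarrow> complex" where
  "delta q p = (if p = q then 1 else 0)"

lemma infsum_delta: "(\<Sum>\<^sub>\<infinity>p. (if p = q then v else 0)) = (v :: complex)"
proof -
  have "(\<Sum>\<^sub>\<infinity>p. (if p = q then v else 0)) = (\<Sum>\<^sub>\<infinity>p\<in>{q}. (if p = q then v else (0::complex)))"
    by (rule infsum_cong_neutral) auto
  then show ?thesis by simp
qed

lemma sqs_delta: "sqs (delta q)"
proof -
  have "(\<lambda>p. (cmod (delta q p))\<^sup>2) summable_on {q}" by simp
  then have "(\<lambda>p. (cmod (delta q p))\<^sup>2) summable_on UNIV"
    by (rule summable_on_cong_neutral[THEN iffD1, rotated -1]) (auto simp: delta_def)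
  then show ?thesis unfolding sqs_def .
qed

lemma shift1_delta: "shift1 (delta (m, n)) = delta (Suc m, n)"
  by (auto simp: fun_eq_iff shift1_def delta_def)
lemma shift2_delta: "shift2 (delta (m, n)) = delta (m, Suc n)"
  by (auto simp: fun_eq_iff shift2_def delta_def)

lemma h2_inner_delta: "h2_inner (ser (delta p)) (ser (delta q)) = (if p = q then 1 else 0)"
proof -
  have "(\<lambda>r. delta p r * cnj (delta q r)) = (\<lambda>r. if r = q then (if p = q then 1 else 0) else 0)"
    by (auto simp: delta_def fun_eq_iff)
  then show ?thesis by (simp add: h2_inner_ser sqs_delta infsum_delta)
qed

lemma h2_inner_delta_right: "sqs a \<Longrightarrow> h2_inner (ser a) (ser (delta q)) = a q"
proof -
  assume a: "sqs a"
  have "(\<lambda>r. a r * cnj (delta q r)) = (\<lambda>r. if r = q then a q else 0)"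
    by (auto simp: delta_def fun_eq_iff)
  then show ?thesis by (simp add: h2_inner_ser[OF a sqs_delta] infsum_delta)
qed


lemma ser_add: assumes "sqs a" "sqs b" shows "ser (\<lambda>p. a p + b p) = (\<lambda>z. ser a z + ser b z)"
proof
  fix z show "ser (\<lambda>p. a p + b p) z = ser a z + ser b z"
  proof (cases "z \<in> bidisc")
    case True
    have sa: "(\<lambda>(m, n). a (m, n) * fst z ^ m * snd z ^ n) summable_on UNIV"
      by (rule h2_summable_at[OF assms(1)[unfolded sqs_def] True])
    have sb: "(\<lambda>(m, n). b (m, n) * fst z ^ m * snd z ^ n) summable_on UNIV"
      by (rule h2_summable_at[OF assms(2)[unfolded sqs_def] True])
    have "(\<Sum>\<^sub>\<infinity>(m, n). (a (m, n) + b (m, n)) * fst z ^ m * snd z ^ n)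
        = (\<Sum>\<^sub>\<infinity>p. (case p of (m, n) \<Rightarrow> a (m, n) * fst z ^ m * snd z ^ n) + (case p of (m, n) \<Rightarrow> b (m, n) * fst z ^ m * snd z ^ n))"
      by (rule infsum_cong) (auto simp: algebra_simps)
    also have "\<dots> = (\<Sum>\<^sub>\<infinity>(m, n). a (m, n) * fst z ^ m * snd z ^ n) + (\<Sum>\<^sub>\<infinity>(m, n). b (m, n) * fst z ^ m * snd z ^ n)"
      by (rule infsum_add[OF sa sb])
    finally show ?thesis using True unfolding ser_def by simp
  next
    case False then show ?thesis unfolding ser_def by simp
  qed
qed

lemma ser_cmult: "ser (\<lambda>p. c * a p) = (\<lambda>z. c * ser a z)"
proof
  fix z show "ser (\<lambda>p. c * a p) z = c * ser a z"
  proof (cases "z \<in> bidisc")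
    case True
    have "(\<Sum>\<^sub>\<infinity>(m, n). c * a (m, n) * fst z ^ m * snd z ^ n)
        = (\<Sum>\<^sub>\<infinity>p. c * (case p of (m, n) \<Rightarrow> a (m, n) * fst z ^ m * snd z ^ n))"
      by (rule infsum_cong) (auto simp: algebra_simps)
    also have "\<dots> = c * (\<Sum>\<^sub>\<infinity>(m, n). a (m, n) * fst z ^ m * snd z ^ n)"
      by (rule infsum_cmult_right')
    finally show ?thesis using True unfolding ser_def by simp
  next
    case False then show ?thesis unfolding ser_def by simp
  qed
qed

context toral
begin

definition Uop :: "'a \<Rightarrow> 'a \<Rightarrow> complex \<times> complex \<Rightarrow> complex" where
  "Uop g x = ser (\<lambda>p. ip x (orb g p))"

lemma onb_unitary: assumes O: "onb g" shows "unitarily_equiv_Mz sc ip T1 T2"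
proof -
  let ?U = "Uop g"
  have sq: "sqs (\<lambda>p. ip x (orb g p))" for x
    unfolding sqs_def by (rule coeff_summable[OF O])
  have cU: "h2_coeff (?U x) = (\<lambda>p. ip x (orb g p))" for x
    unfolding Uop_def by (rule coeff_ser[OF sq])
  have add: "?U (x + y) = (\<lambda>z. ?U x z + ?U y z)" for x y
    unfolding Uop_def by (simp add: ip_add_left ser_add[OF sq sq])
  have scl: "?U (sc c x) = (\<lambda>z. c * ?U x z)" for c x
    unfolding Uop_def by (simp add: ip_sc_left ser_cmult)
  have inner: "h2_inner (?U x) (?U y) = ip x y" for x y
    unfolding Uop_def h2_inner_ser[OF sq sq] by (rule parseval_ip[OF O, symmetric])
  have t1: "?U (T1 x) = Mz1 (?U x)" for x
  proof -
    have "(\<lambda>p. ip (T1 x) (orb g p)) = shift1 (\<lambda>p. ip x (orb g p))"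
    proof
      fix p show "ip (T1 x) (orb g p) = shift1 (\<lambda>p. ip x (orb g p)) p"
        by (cases p) (simp add: coeff_T1[OF O] shift1_def)
    qed
    then show ?thesis unfolding Uop_def Mz1_ser by simp
  qed
  have t2: "?U (T2 x) = Mz2 (?U x)" for x
  proof -
    have "(\<lambda>p. ip (T2 x) (orb g p)) = shift2 (\<lambda>p. ip x (orb g p))"
    proof
      fix p show "ip (T2 x) (orb g p) = shift2 (\<lambda>p. ip x (orb g p)) p"
        by (cases p) (simp add: coeff_T2[OF O] shift2_def)
    qed
    then show ?thesis unfolding Uop_def Mz2_ser by simp
  qed
  have inj: "inj ?U"
  proof (rule injI)
    fix x y assume "?U x = ?U y"
    then have feq: "(\<lambda>p. ip x (orb g p)) = (\<lambda>p. ip y (orb g p))" using cU by metis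
    have "ip (x - y) (orb g p) = 0" for p using fun_cong[OF feq, of p] by (simp add: ip_diff_left)
    then have "(hn (x - y))\<^sup>2 = 0" using parseval_norm[OF O, of "x - y"] by simp
    then show "x = y" by simp
  qed
  have img: "range ?U = H2"
  proof (intro set_eqI iffI)
    fix f assume "f \<in> range ?U"
    then show "f \<in> H2" unfolding Uop_def using ser_H2[OF sq] by auto
  next
    fix f assume f: "f \<in> H2"
    then have fs: "f = ser (h2_coeff f)" and sq': "sqs (h2_coeff f)" using H2_ser by auto
    obtain x where x: "\<forall>p. ip x (orb g p) = h2_coeff f p"
      using synth[OF O sq'[unfolded sqs_def]] by blast
    have "?U x = f" unfolding Uop_def using x fs by (metis ext)
    then show "f \<in> range ?U" by (metis rangeI)
  qed
  have "bij_betw ?U UNIV H2" using inj img by (simp add: bij_betw_def)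
  then show ?thesis unfolding unitarily_equiv_Mz_def using add scl inner t1 t2 by blast
qed

end


context toral
begin

lemma dense_transfer:
  assumes d: "hclosure ip (hspan sc (range (orb f))) = UNIV" and fg: "f = sc c g"
  shows "hclosure ip (hspan sc (range (orb g))) = UNIV"
proof -
  have "range (orb f) \<subseteq> hspan sc (range (orb g))"
  proof
    fix v assume "v \<in> range (orb f)"
    then obtain p where v: "v = orb f p" by blast
    have "v = sc c (orb g p)"
      unfolding v orb_def fg by (simp add: iso_sc[OF iso_pow[OF i1]] iso_sc[OF iso_pow[OF i2]])
    then show "v \<in> hspan sc (range (orb g))" by (simp add: hspan_sc hspan_superset)
  qed
  then have "hspan sc (range (orb f)) \<subseteq> hspan sc (range (orb g))" by (rule hspan_mono)
  then have "hclosure ip (hspan sc (range (orb f))) \<subseteq> hclosure ip (hspan sc (range (orb g)))"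
    by (rule hclosure_mono)
  then show ?thesis using d by auto
qed

lemma adj1_T1_zero: "hadj ip T1 w = 0 \<Longrightarrow> ip w (T1 y) = 0"
  using hadj_prop[OF i1, of y w] ip_cnj[of "T1 y" w] by simp
lemma adj2_T2_zero: "hadj ip T2 w = 0 \<Longrightarrow> ip w (T2 y) = 0"
  using hadj_prop[OF i2, of y w] ip_cnj[of "T2 y" w] by simp

lemma unitary_onb:
  assumes U: "unitarily_equiv_Mz sc ip T1 T2" and cyc: "hclosure ip (hspan sc (range (orb f0))) = UNIV"
    and f0: "f0 \<noteq> 0" "f0 \<in> kerTstar ip T1 T2"
  shows "\<exists>g. onb g"
proof -
  obtain U where bij: "bij_betw U UNIV H2"
    and add: "\<And>x y. U (x + y) = (\<lambda>z. U x z + U y z)"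
    and scl: "\<And>c x. U (sc c x) = (\<lambda>z. c * U x z)"
    and inner: "\<And>x y. h2_inner (U x) (U y) = ip x y"
    and t1: "\<And>x. U (T1 x) = Mz1 (U x)" and t2: "\<And>x. U (T2 x) = Mz2 (U x)"
    using U unfolding unitarily_equiv_Mz_def by blast
  have injU: "inj U" using bij by (simp add: bij_betw_def)
  have rU: "range U = H2" using bij by (simp add: bij_betw_def)
  obtain g where g: "U g = ser (delta (0, 0))" using ser_H2[OF sqs_delta] rU by (metis imageE)
  have u2: "U ((T2 ^^ n) g) = ser (delta (0, n))" for n
    by (induction n) (simp_all add: g t2 Mz2_ser shift2_delta)
  have u12: "U ((T1 ^^ m) ((T2 ^^ n) g)) = ser (delta (m, n))" for m n
    by (induction m) (simp_all add: u2 t1 Mz1_ser shift1_delta)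
  have uorb: "U (orb g p) = ser (delta p)" for p
    by (cases p) (simp add: orb_def u12)
  have orth: "ip (orb g p) (orb g q) = (if p = q then 1 else 0)" for p q
    using inner[of "orb g p" "orb g q"] by (simp add: uorb h2_inner_delta)
  have "U f0 \<in> H2" using rU by auto
  then have fs: "U f0 = ser (h2_coeff (U f0))" and sqa: "sqs (h2_coeff (U f0))" using H2_ser by auto
  define a where "a = h2_coeff (U f0)"
  have a0: "a p = 0" if np: "p \<noteq> (0, 0)" for p
  proof -
    have "a p = h2_inner (U f0) (U (orb g p))"
      unfolding uorb a_def by (subst fs) (rule h2_inner_delta_right[OF sqa, symmetric])
    also have "\<dots> = ip f0 (orb g p)" by (rule inner)
    also have "\<dots> = 0"
    proof -
      obtain m n where p: "p = (m, n)" by (cases p)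
      show ?thesis
      proof (cases m)
        case (Suc k)
        then have "orb g p = T1 (orb g (k, n))" by (simp add: p orb_T1)
        then show ?thesis using f0(2) adj1_T1_zero unfolding kerTstar_def by simp
      next
        case 0
        then obtain k where "n = Suc k" using np p by (cases n) auto
        then have "orb g p = T2 (orb g (m, k))" by (simp add: p orb_T2)
        then show ?thesis using f0(2) adj2_T2_zero unfolding kerTstar_def by simp
      qed
    qed
    finally show ?thesis .
  qed
  define c where "c = a (0, 0)"
  have "a = (\<lambda>p. c * delta (0, 0) p)" using a0 unfolding c_def delta_def by (auto simp: fun_eq_iff)
  then have "U f0 = (\<lambda>z. c * ser (delta (0, 0)) z)" using fs unfolding a_def by (simp add: ser_cmult)
  also have "\<dots> = U (sc c g)" by (simp add: scl g)
  finally have fg: "f0 = sc c g" using injU by (simp add: inj_eq)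
  have "hclosure ip (hspan sc (range (orb g))) = UNIV" by (rule dense_transfer[OF cyc fg])
  then show ?thesis using orth unfolding onb_def by blast
qed

lemma orb_shift: "orb w (k + a1, l + a2) = (T1 ^^ k) ((T2 ^^ l) (orb w (a1, a2)))"
  by (simp add: orb_def funpow_add comm_pow)

lemma iso_kl: "hisometry sc ip (\<lambda>x. (T1 ^^ k) ((T2 ^^ l) x))"
  using iso_comp[OF iso_pow[OF i1] iso_pow[OF i2], of k l] by (simp add: comp_def)

lemma orb_cancel: "ip (orb w (k + a1, l + a2)) (orb v (k + b1, l + b2)) = ip (orb w (a1, a2)) (orb v (b1, b2))"
  unfolding orb_shift by (rule iso_ip[OF iso_kl])

lemma wandering_onb:
  assumes W: "wandering sc ip T1 T2 (kerTstar ip T1 T2)" and cyc: "hclosure ip (hspan sc (range (orb f0))) = UNIV"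
    and f0: "f0 \<noteq> 0" "f0 \<in> kerTstar ip T1 T2"
  shows "\<exists>g. onb g"
proof -
  define g where "g = sc (1 / of_real (hn f0)) f0"
  have hf: "hn f0 > 0" using f0(1) hn_nonneg[of f0] hn_zero_iff[of f0] by linarith
  have gW: "g \<in> kerTstar ip T1 T2"
    using W f0(2) unfolding wandering_def closed_hsubspace_def g_def by blast
  have wan: "ip (orb g (a1, a2)) (orb g (b1, b2)) = 0" if "(a1 = 0 \<and> b1 \<noteq> 0) \<or> (a2 = 0 \<and> b2 \<noteq> 0)" for a1 a2 b1 b2
    using W gW that unfolding wandering_def orb_def by auto
  have hg: "hn g = 1" unfolding g_def using hf f0(1) by (simp add: hn_sc norm_divide)
  have gg: "ip g g = 1" using ip_self[of g] hg by simp
  have orth: "ip (orb g p) (orb g q) = (if p = q then 1 else 0)" for p q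
  proof -
    obtain a1 a2 where p: "p = (a1, a2)" by (cases p)
    obtain b1 b2 where q: "q = (b1, b2)" by (cases q)
    define k where "k = min a1 b1"
    define l where "l = min a2 b2"
    define a1' where "a1' = a1 - k"
    define a2' where "a2' = a2 - l"
    define b1' where "b1' = b1 - k"
    define b2' where "b2' = b2 - l"
    have e: "a1 = k + a1'" "a2 = l + a2'" "b1 = k + b1'" "b2 = l + b2'"
      unfolding k_def l_def a1'_def a2'_def b1'_def b2'_def by auto
    have z1: "a1' = 0 \<or> b1' = 0" and z2: "a2' = 0 \<or> b2' = 0"
      unfolding k_def l_def a1'_def a2'_def b1'_def b2'_def by auto
    have red: "ip (orb g p) (orb g q) = ip (orb g (a1', a2')) (orb g (b1', b2'))"
      unfolding p q e by (rule orb_cancel)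
    show ?thesis
    proof (cases "a1' = b1' \<and> a2' = b2'")
      case True
      then have "a1' = 0" "a2' = 0" "b1' = 0" "b2' = 0" using z1 z2 by auto
      moreover have "p = q" using True unfolding p q e by simp
      ultimately show ?thesis using red gg by (simp add: orb_def)
    next
      case False
      then have pq: "p \<noteq> q" unfolding p q e by simp
      have "ip (orb g (a1', a2')) (orb g (b1', b2')) = 0"
      proof (cases "(a1' = 0 \<and> b1' \<noteq> 0) \<or> (a2' = 0 \<and> b2' \<noteq> 0)")
        case True then show ?thesis by (rule wan)
      next
        case False
        then have "(b1' = 0 \<and> a1' \<noteq> 0) \<or> (b2' = 0 \<and> a2' \<noteq> 0)"
          using z1 z2 \<open>\<not> (a1' = b1' \<and> a2' = b2')\<close> by auto
        then have "ip (orb g (b1', b2')) (orb g (a1', a2')) = 0" by (rule wan)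
        then show ?thesis using ip_cnj[of "orb g (b1', b2')" "orb g (a1', a2')"] by simp
      qed
      then show ?thesis using red pq by simp
    qed
  qed
  have fg: "f0 = sc (of_real (hn f0)) g" unfolding g_def using hf by (simp add: sc_assoc)
  have "hclosure ip (hspan sc (range (orb g))) = UNIV" by (rule dense_transfer[OF cyc fg])
  then show ?thesis using orth unfolding onb_def by blast
qed

lemma adj_pow_zero: "hisometry sc ip T \<Longrightarrow> (hadj ip T ^^ n) 0 = 0"
  by (induction n) (simp_all add: adj_zero)

lemma adj_pow_comm:
  assumes "\<And>x. A (S x) = S (A x)"
  shows "(A ^^ n) ((S ^^ m) x) = (S ^^ m) ((A ^^ n) x)"
proof -
  have a: "A ((S ^^ m) y) = (S ^^ m) (A y)" for y by (induction m arbitrary: y) (simp_all add: assms)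
  show ?thesis by (induction n arbitrary: x) (simp_all add: a)
qed

lemma ip_adj_pow_right: assumes T: "hisometry sc ip T"
  shows "ip x ((T ^^ n) y) = ip ((hadj ip T ^^ n) x) y"
  using adj_pow[OF T, of n y x] ip_cnj[of "(T ^^ n) y" x] ip_cnj[of y "(hadj ip T ^^ n) x"] by simp

lemma dc_wandering:
  assumes D: "doubly_commuting ip T1 T2"
  shows "wandering sc ip T1 T2 (kerTstar ip T1 T2)"
proof -
  let ?A1 = "hadj ip T1" and ?A2 = "hadj ip T2"
  let ?K = "kerTstar ip T1 T2"
  have c1: "?A1 (T2 x) = T2 (?A1 x)" for x using D unfolding doubly_commuting_def by (metis comp_apply)
  have c2: "?A2 (T1 x) = T1 (?A2 x)" for x using D unfolding doubly_commuting_def by (metis comp_apply)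
  have closed: "closed_hsubspace sc ip ?K"
    unfolding closed_hsubspace_def kerTstar_def
  proof (intro conjI ballI allI subsetI)
    show "0 \<in> {x. ?A1 x = 0 \<and> ?A2 x = 0}" by (simp add: adj_zero[OF i1] adj_zero[OF i2])
    show "x + y \<in> {x. ?A1 x = 0 \<and> ?A2 x = 0}" if "x \<in> {x. ?A1 x = 0 \<and> ?A2 x = 0}" "y \<in> {x. ?A1 x = 0 \<and> ?A2 x = 0}" for x y
      using that by (simp add: adj_add[OF i1] adj_add[OF i2])
    show "sc c x \<in> {x. ?A1 x = 0 \<and> ?A2 x = 0}" if "x \<in> {x. ?A1 x = 0 \<and> ?A2 x = 0}" for x c
      using that by (simp add: adj_sc[OF i1] adj_sc[OF i2])
    fix x assume x: "x \<in> hclosure ip {x. ?A1 x = 0 \<and> ?A2 x = 0}"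
    have small: "hadj ip T x = 0" if T: "hisometry sc ip T" and "\<And>y. y \<in> {x. ?A1 x = 0 \<and> ?A2 x = 0} \<Longrightarrow> hadj ip T y = 0" for T
    proof (rule eq_by_small)
      fix e :: real assume e: "e > 0"
      then obtain y where y: "y \<in> {x. ?A1 x = 0 \<and> ?A2 x = 0}" "hn (x - y) < e"
        using x unfolding hclosure_def by blast
      have "hadj ip T x = hadj ip T (x - y)" using that(2)[OF y(1)] by (simp add: adj_diff[OF T])
      then have "hn (hadj ip T x) \<le> hn (x - y)" using adj_bounded[OF T, of "x - y"] by simp
      then show "hn (hadj ip T x) < e" using y(2) by linarith
    qed
    show "x \<in> {x. ?A1 x = 0 \<and> ?A2 x = 0}"
      using small[OF i1] small[OF i2] by blast
  qed
  have orth: "ip ((T1 ^^ a1) ((T2 ^^ a2) w)) ((T1 ^^ b1) ((T2 ^^ b2) v)) = 0"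
    if ab: "(a1 = 0 \<and> b1 \<noteq> 0) \<or> (a2 = 0 \<and> b2 \<noteq> 0)" and w: "w \<in> ?K" for a1 a2 b1 b2 w v
  proof -
    have w1: "?A1 w = 0" and w2: "?A2 w = 0" using w unfolding kerTstar_def by auto
    from ab show ?thesis
    proof
      assume h: "a1 = 0 \<and> b1 \<noteq> 0"
      then obtain k where b1: "b1 = Suc k" by (cases b1) auto
      have "ip ((T1 ^^ a1) ((T2 ^^ a2) w)) ((T1 ^^ b1) ((T2 ^^ b2) v))
          = ip ((?A1 ^^ b1) ((T2 ^^ a2) w)) ((T2 ^^ b2) v)"
        using h by (simp add: ip_adj_pow_right[OF i1])
      also have "(?A1 ^^ b1) ((T2 ^^ a2) w) = (T2 ^^ a2) ((?A1 ^^ b1) w)"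
        by (rule adj_pow_comm) (rule c1)
      also have "(?A1 ^^ b1) w = 0" unfolding b1 using adj_pow_zero[OF i1, of k]
        by (simp add: funpow_Suc_right w1 del: funpow.simps)
      finally show ?thesis by (simp add: iso_zero[OF iso_pow[OF i2]])
    next
      assume h: "a2 = 0 \<and> b2 \<noteq> 0"
      then obtain k where b2: "b2 = Suc k" by (cases b2) auto
      have "ip ((T1 ^^ a1) ((T2 ^^ a2) w)) ((T1 ^^ b1) ((T2 ^^ b2) v))
          = ip ((T1 ^^ a1) w) ((T2 ^^ b2) ((T1 ^^ b1) v))"
        using h by (simp add: comm_pow)
      also have "\<dots> = ip ((?A2 ^^ b2) ((T1 ^^ a1) w)) ((T1 ^^ b1) v)"
        by (rule ip_adj_pow_right[OF i2])
      also have "(?A2 ^^ b2) ((T1 ^^ a1) w) = (T1 ^^ a1) ((?A2 ^^ b2) w)"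
        by (rule adj_pow_comm) (rule c2)
      also have "(?A2 ^^ b2) w = 0" unfolding b2 using adj_pow_zero[OF i2, of k]
        by (simp add: funpow_Suc_right w2 del: funpow.simps)
      finally show ?thesis by (simp add: iso_zero[OF iso_pow[OF i1]])
    qed
  qed
  show ?thesis unfolding wandering_def using closed orth by blast
qed

end


theorem corollary6p6:
  fixes sc :: "complex \<Rightarrow> 'a::ab_group_add \<Rightarrow> 'a"
    and ip :: "'a \<Rightarrow> 'a \<Rightarrow> complex"
    and T1 T2 :: "'a \<Rightarrow> 'a" and f0 :: 'a
  assumes "complex_hilbert sc ip"
    and "toral_isometry sc ip T1 T2"
    and "analytic_pair T1 T2"
    and "cyclic_vector sc ip T1 T2 f0"
    and "f0 \<noteq> 0"
    and "f0 \<in> kerTstar ip T1 T2"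
  shows "(wandering sc ip T1 T2 (kerTstar ip T1 T2) \<longleftrightarrow> unitarily_equiv_Mz sc ip T1 T2)
       \<and> (unitarily_equiv_Mz sc ip T1 T2 \<longleftrightarrow> doubly_commuting ip T1 T2)"
proof -
  have i1: "hisometry sc ip T1" and i2: "hisometry sc ip T2" and cm: "T1 \<circ> T2 = T2 \<circ> T1"
    using assms(2) unfolding toral_isometry_def by auto
  interpret T: toral sc ip T1 T2
    by (rule toral.intro[OF chs.intro[OF assms(1)]]) (rule toral_axioms.intro[OF i1 i2 cm])
  have cyc: "hclosure ip (hspan sc (range (T.orb f0))) = UNIV"
    using assms(4) unfolding cyclic_vector_def T.orbit_set .
  have A: "wandering sc ip T1 T2 (kerTstar ip T1 T2) \<Longrightarrow> \<exists>g. T.onb g"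
    by (rule T.wandering_onb[OF _ cyc assms(5) assms(6)])
  have B: "unitarily_equiv_Mz sc ip T1 T2 \<Longrightarrow> \<exists>g. T.onb g"
    by (rule T.unitary_onb[OF _ cyc assms(5) assms(6)])
  have C: "T.onb g \<Longrightarrow> unitarily_equiv_Mz sc ip T1 T2 \<and> doubly_commuting ip T1 T2" for g
    using T.onb_unitary T.doubly by blast
  have D: "doubly_commuting ip T1 T2 \<Longrightarrow> wandering sc ip T1 T2 (kerTstar ip T1 T2)"
    by (rule T.dc_wandering)
  show ?thesis using A B C D by blast
qed


end
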